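(* There is an absolute constant $C>0$ such that the following holds. Let $\mu\in\mathbb{R}^2$, and let $v_1,v_2\in\mathbb{R}^2$ be linearly independent unit vectors. Let $\epsilon,\gamma>0$. Suppose the following hold. - Estimates $\hat d_1\ge\hat d_2\ge0$ are known with $|\hat d_1-\langle v_1,\mu\rangle|\le\epsilon$ and $|\hat d_2-\langle v_2,\mu\rangle|\le\epsilon$. - For all $u_1\in\{\pm v_1\}$ and $u_2\in\{\pm v_2\}$, $\Pr_{X\sim\mathcal{N}(\mu,I)}\{\langle X,u_1\rangle\ge0,\langle X,u_2\rangle\ge0\}\ge\gamma$. - Estimates $\hat\gamma_{s_1,s_2}$, for $s_1\in\{\pm v_1\}$ and $s_2\in\{\pm v_2\}$, are known with $|\hat\gamma_{s_1,s_2}-\Pr_{X\sim\mathcal{N}(\mu,I)}\{\langle X,s_1\rangle\ge0,\langle X,s_2\rangle\ge0\}|\le\epsilon$. Then an estimate $\hat\beta$ can be computed from $\hat d_1$, $\hat d_2$ and the four values $\hat\gamma_{s_1,s_2}$ (indexed by the sign pattern of $(s_1,s_2)$) such that $$|\hat\beta-\langle v_1,v_2\rangle|\le C\frac{\epsilon}{\gamma^4}\sqrt{\log(1/(\gamma\epsilon))}.$$ *)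

theory Defs
  imports "HOL-Probability.Probability"
begin

definition gauss2 :: "real^2 \<Rightarrow> (real^2) measure" where
  "gauss2 mu = density lborel
     (\<lambda>x. ennreal (exp (- (norm (x - mu))\<^sup>2 / 2) / (2 * pi)))"

definition gauss2_prob :: "real^2 \<Rightarrow> (real^2) set \<Rightarrow> real" where
  "gauss2_prob mu A = measure (gauss2 mu) A"

definition quad_prob :: "real^2 \<Rightarrow> real^2 \<Rightarrow> real^2 \<Rightarrow> real" where
  "quad_prob mu u1 u2 = gauss2_prob mu {x. x \<bullet> u1 \<ge> 0 \<and> x \<bullet> u2 \<ge> 0}"

end

theory Submission
  imports Defs
begin

lemma Basis_vec2: "(Basis :: (real^2) set) = {axis 1 1, axis 2 1}"
  apply (simp add: Basis_vec_def)
  apply (auto simp: UNIV_2)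
  done

lemma axis_neq2: "axis 1 (1::real) \<noteq> (axis 2 1 :: real^2)"
  by (simp add: axis_eq_axis)

lemma fub2:
  fixes F G :: "real \<Rightarrow> ennreal"
  assumes [measurable]: "F \<in> borel_measurable borel" "G \<in> borel_measurable borel"
  shows "(\<integral>\<^sup>+x. F (x$1) * G (x$2) \<partial>(lborel::(real^2) measure)) = (\<integral>\<^sup>+x. F x \<partial>lborel) * (\<integral>\<^sup>+x. G x \<partial>lborel)"
proof -
  define f where "f = (\<lambda>b::real^2. if b = axis 1 1 then F else G)"
  have "(\<integral>\<^sup>+x. (\<Prod>b\<in>Basis. f b (x \<bullet> b)) \<partial>(lborel::(real^2) measure)) = (\<Prod>b\<in>Basis. (\<integral>\<^sup>+x. f b x \<partial>lborel))"
    by (rule nn_integral_lborel_prod) (auto simp: f_def)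
  moreover have "\<And>x::real^2. (\<Prod>b\<in>Basis. f b (x \<bullet> b)) = F (x$1) * G (x$2)"
    using axis_neq2 by (simp add: Basis_vec2 f_def inner_axis)
  moreover have "(\<Prod>b\<in>(Basis::(real^2) set). (\<integral>\<^sup>+x. f b x \<partial>lborel)) = (\<integral>\<^sup>+x. F x \<partial>lborel) * (\<integral>\<^sup>+x. G x \<partial>lborel)"
    using axis_neq2 by (simp add: Basis_vec2 f_def)
  ultimately show ?thesis by simp
qed
definition rotm :: "real^2 \<Rightarrow> real^2 \<Rightarrow> real^2 \<Rightarrow> real^2" where
  "rotm p q z = z$1 *\<^sub>R p + z$2 *\<^sub>R q"

lemma inner2: "(x::real^2) \<bullet> y = x$1*y$1 + x$2*y$2"
  by (simp add: inner_vec_def sum_2)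

lemma norm2: "norm (x::real^2) = sqrt (x$1^2 + x$2^2)"
  by (simp add: norm_vec_def L2_set_def sum_2)

lemma rotm_meas[measurable]: "rotm p q \<in> borel_measurable borel"
  unfolding rotm_def by measurable

lemma orth_rows:
  fixes p q :: "real^2"
  assumes "p \<bullet> p = 1" "q \<bullet> q = 1" "p \<bullet> q = 0"
  shows "(p$1*q$2 - p$2*q$1)^2 = 1" "p$1^2 + q$1^2 = 1" "p$2^2 + q$2^2 = 1" "p$1*p$2 + q$1*q$2 = 0"
proof -
  have h: "p$1^2+p$2^2 = 1" "q$1^2+q$2^2=1" "p$1*q$1+p$2*q$2 = 0" using assms by (auto simp: inner2 power2_eq_square)
  have "(p$1*q$2 - p$2*q$1)^2 = (p$1^2+p$2^2)*(q$1^2+q$2^2) - (p$1*q$1+p$2*q$2)^2"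
    by (simp add: power2_eq_square algebra_simps)
  then show d: "(p$1*q$2 - p$2*q$1)^2 = 1" using h by simp
  define d where "d = p$1*q$2 - p$2*q$1"
  have "q$1 + d*p$2 = p$1*(p$1*q$1+p$2*q$2) + q$1*(1 - p$1^2 - p$2^2)"
    by (simp add: d_def power2_eq_square algebra_simps)
  moreover have z: "1 - p$1^2 - p$2^2 = 0" using h(1) by simp
  ultimately have q1: "q$1 = - d * p$2" using h(3) by simp
  have "q$2 - d*p$1 = p$2*(p$1*q$1+p$2*q$2) + q$2*(1 - p$1^2 - p$2^2)"
    by (simp add: d_def power2_eq_square algebra_simps)
  then have q2: "q$2 = d * p$1" using h(3) z by simp
  have dd: "d^2 = 1" using d d_def by simp
  have "p$1^2 + q$1^2 = p$1^2 + d^2 * p$2^2" using q1 by (simp add: power_mult_distrib)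
  then show "p$1^2 + q$1^2 = 1" using dd h(1) by simp
  have "p$2^2 + q$2^2 = p$2^2 + d^2 * p$1^2" using q2 by (simp add: power_mult_distrib)
  then show "p$2^2 + q$2^2 = 1" using dd h(1) by simp
  have "p$1*p$2 + q$1*q$2 = p$1*p$2*(1 - d^2)" using q1 q2 by (simp add: power2_eq_square algebra_simps)
  then show "p$1*p$2 + q$1*q$2 = 0" using dd by simp
qed
definition rinv :: "real^2 \<Rightarrow> real^2 \<Rightarrow> real^2 \<Rightarrow> real^2" where
  "rinv p q x = vector [x \<bullet> p, x \<bullet> q]"

definition orthn :: "real^2 \<Rightarrow> real^2 \<Rightarrow> bool" where
  "orthn p q \<longleftrightarrow> p \<bullet> p = 1 \<and> q \<bullet> q = 1 \<and> p \<bullet> q = 0"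

lemma rotm_comp:
  "rotm p q z $ 1 = z$1 * p$1 + z$2 * q$1" "rotm p q z $ 2 = z$1 * p$2 + z$2 * q$2"
  by (simp_all add: rotm_def)

lemma rinv_rotm: assumes "orthn p q" shows "rinv p q (rotm p q z) = z"
proof -
  have h: "p \<bullet> p = 1" "q \<bullet> q = 1" "p \<bullet> q = 0" "q \<bullet> p = 0" using assms unfolding orthn_def by (auto simp: inner_commute)
  show ?thesis by (simp add: rinv_def rotm_def inner_add_left vec_eq_iff forall_2 h)
qed

lemma rotm_rinv: assumes "orthn p q" shows "rotm p q (rinv p q x) = x"
proof -
  have r: "p$1^2 + q$1^2 = 1" "p$2^2 + q$2^2 = 1" "p$1*p$2 + q$1*q$2 = 0"
    using orth_rows assms unfolding orthn_def by auto
  have "x$1 * (p$1^2 + q$1^2) + x$2 * (p$1*p$2 + q$1*q$2) = x$1"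
       "x$1 * (p$1*p$2 + q$1*q$2) + x$2 * (p$2^2 + q$2^2) = x$2" using r by simp_all
  then show ?thesis
    by (auto simp: rinv_def rotm_def inner2 vec_eq_iff forall_2 power2_eq_square algebra_simps)
qed

lemma rotm_norm: assumes "orthn p q" shows "norm (rotm p q z) = norm z"
proof -
  have "rotm p q z \<bullet> rotm p q z = z \<bullet> z"
  proof -
    have h: "p \<bullet> p = 1" "q \<bullet> q = 1" "p \<bullet> q = 0" "q \<bullet> p = 0" using assms unfolding orthn_def by (auto simp: inner_commute)
    have "rotm p q z \<bullet> rotm p q z = z$1 * z$1 + z$2 * z$2"
      by (simp add: rotm_def inner_add_left inner_add_right h)
    then show ?thesis by (simp add: inner2)
  qed
  then show ?thesis by (simp add: norm_eq_sqrt_inner)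
qed

lemma rinv_linear: "linear (rinv p q)"
  by (rule linearI) (auto simp: rinv_def vec_eq_iff forall_2 inner_add_left)

lemma det_rinv: assumes "orthn p q" shows "\<bar>det (matrix (rinv p q))\<bar> = 1"
proof -
  have "det (matrix (rinv p q)) = p$1*q$2 - p$2*q$1"
    by (simp add: det_2 matrix_def rinv_def inner2 axis_def)
  moreover have "(p$1*q$2 - p$2*q$1)^2 = 1" using orth_rows assms unfolding orthn_def by auto
  ultimately show ?thesis by (simp add: power2_eq_1_iff) (metis abs_1 abs_minus_cancel)
qed

lemma lborel_rot:
  assumes o: "orthn p q"
  shows "distr lborel borel (\<lambda>z. rotm p q z + mu) = (lborel :: (real^2) measure)"
proof (rule lborel_eqI[symmetric])
  show "sets (distr lborel borel (\<lambda>z. rotm p q z + mu)) = sets borel" by simp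
  fix l u :: "real^2" assume le: "\<And>b. b \<in> Basis \<Longrightarrow> l \<bullet> b \<le> u \<bullet> b"
  let ?T = "\<lambda>z. rotm p q z + mu"
  have pre: "?T -` box l u = rinv p q ` ((\<lambda>x. x - mu) ` box l u)"
  proof (intro set_eqI iffI)
    fix z assume "z \<in> ?T -` box l u"
    then have "?T z \<in> box l u" by simp
    moreover have "z = rinv p q ((rotm p q z + mu) - mu)" using rinv_rotm[OF o] by simp
    ultimately show "z \<in> rinv p q ` ((\<lambda>x. x - mu) ` box l u)" by blast
  next
    fix z assume "z \<in> rinv p q ` ((\<lambda>x. x - mu) ` box l u)"
    then obtain x where x: "x \<in> box l u" "z = rinv p q (x - mu)" by blast
    then have "?T z = x" using rotm_rinv[OF o] by simp
    then show "z \<in> ?T -` box l u" using x by simp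
  qed
  have Tm: "?T \<in> borel_measurable borel" by measurable
  have "?T -` box l u \<inter> space borel \<in> sets borel" by (rule measurable_sets[OF Tm]) auto
  then have bor: "?T -` box l u \<in> sets borel" by simp
  have lm: "(\<lambda>x. x - mu) ` box l u \<in> lmeasurable" by (rule measurable_translation_subtract) simp
  have lm2: "?T -` box l u \<in> lmeasurable" unfolding pre
    by (rule measurable_linear_image[OF rinv_linear lm])
  have "measure lebesgue (?T -` box l u) = measure lebesgue (box l u)"
    unfolding pre measure_linear_image[OF rinv_linear lm] det_rinv[OF o] measure_translation_subtract by simp
  then have "emeasure lebesgue (?T -` box l u) = emeasure lebesgue (box l u)"
    using lm2 by (simp add: emeasure_eq_measure2)
  then have "emeasure lborel (?T -` box l u) = emeasure lborel (box l u)"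
    using bor by simp
  then show "emeasure (distr lborel borel ?T) (box l u) = (\<Prod>b\<in>Basis. (u - l) \<bullet> b)"
  proof -
    have Tm': "?T \<in> measurable lborel borel" using Tm by simp
    have "emeasure (distr lborel borel ?T) (box l u) = emeasure lborel (?T -` box l u \<inter> space lborel)"
      by (rule emeasure_distr[OF Tm']) simp
    also have "\<dots> = emeasure lborel (box l u)" using \<open>emeasure lborel (?T -` box l u) = _\<close> by simp
    finally show ?thesis using le by simp
  qed
qed
lemma std_int1: "(\<integral>\<^sup>+x. ennreal (std_normal_density x) \<partial>lborel) = 1"
proof -
  have "emeasure (density lborel (\<lambda>x. ennreal (std_normal_density x))) (space (density lborel (\<lambda>x. ennreal (std_normal_density x)))) = 1"
    by (rule prob_space.emeasure_space_1[OF prob_space_normal_density]) simp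
  then show ?thesis by (simp add: emeasure_density)
qed

lemma g0_prod: "ennreal (exp (- (norm (x::real^2))\<^sup>2 / 2) / (2 * pi)) =
   ennreal (std_normal_density (x$1)) * ennreal (std_normal_density (x$2))"
proof -
  have n: "(norm x)^2 = (x$1)^2 + (x$2)^2" by (simp add: norm2)
  have s: "1 / sqrt (2*pi) * (1 / sqrt (2*pi)) = 1 / (2 * pi)" by (simp add: real_sqrt_mult[symmetric])
  have e: "exp (- ((x$1)\<^sup>2 + (x$2)\<^sup>2) / 2) = exp (- (x$1)\<^sup>2 / 2) * exp (- (x$2)\<^sup>2 / 2)"
    by (simp add: exp_add[symmetric] diff_divide_distrib add_divide_distrib)
  have "std_normal_density (x$1) * std_normal_density (x$2) = (1 / sqrt (2*pi) * (1 / sqrt (2*pi))) * (exp (- (x$1)\<^sup>2 / 2) * exp (- (x$2)\<^sup>2 / 2))"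
    unfolding std_normal_density_def by (simp only: mult_ac)
  also have "\<dots> = exp (- (norm x)\<^sup>2 / 2) / (2 * pi)" unfolding s e[symmetric] n by simp
  finally have "exp (- (norm x)\<^sup>2 / 2) / (2 * pi) = std_normal_density (x$1) * std_normal_density (x$2)" by simp
  then show ?thesis by (simp add: ennreal_mult'')
qed

lemma gauss0_emeasure:
  assumes "A \<in> sets borel"
  shows "emeasure (gauss2 0) A = (\<integral>\<^sup>+x. ennreal (std_normal_density (x$1)) * ennreal (std_normal_density (x$2)) * indicator A x \<partial>lborel)"
proof -
  have "emeasure (gauss2 0) A = (\<integral>\<^sup>+x. ennreal (exp (- (norm (x - 0))\<^sup>2 / 2) / (2 * pi)) * indicator A x \<partial>lborel)"
    unfolding gauss2_def using assms by (simp add: emeasure_density)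
  also have "\<dots> = (\<integral>\<^sup>+x. ennreal (std_normal_density (x$1)) * ennreal (std_normal_density (x$2)) * indicator A x \<partial>lborel)"
    by (rule nn_integral_cong) (simp only: diff_zero g0_prod)
  finally show ?thesis .
qed

lemma gauss0_prob: "prob_space (gauss2 0)"
proof
  have "emeasure (gauss2 0) UNIV = (\<integral>\<^sup>+(x::real^2). ennreal (std_normal_density (x$1)) * ennreal (std_normal_density (x$2)) \<partial>lborel)"
    by (simp add: gauss0_emeasure)
  also have "\<dots> = 1" by (subst fub2) (simp_all add: std_int1)
  finally show "emeasure (gauss2 0) (space (gauss2 0)) = 1" by (simp add: gauss2_def)
qed

lemma gauss0_sets[simp]: "sets (gauss2 mu) = sets borel"
  by (simp add: gauss2_def)

lemma std_le1: "std_normal_density x \<le> 1"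
proof -
  have a: "exp (- x\<^sup>2 / 2) \<le> 1" by simp
  have b: "1 / sqrt (2 * pi) \<le> 1" using pi_gt3 by (simp add: divide_le_eq)
  have "1 / sqrt (2 * pi) * exp (- x\<^sup>2 / 2) \<le> 1 * 1"
    by (rule mult_mono[OF b a]) simp_all
  then show ?thesis unfolding std_normal_density_def by simp
qed

lemma strip_axis:
  assumes "h \<ge> 0"
  shows "gauss2_prob 0 {z. t \<le> z$1 \<and> z$1 \<le> t + h} \<le> h"
proof -
  let ?S = "{z::real^2. t \<le> z$1 \<and> z$1 \<le> t + h}"
  have S: "?S \<in> sets borel" by measurable
  have ind: "\<And>z::real^2. indicator ?S z = (indicator {t..t+h} (z$1) :: ennreal)"
    by (auto simp: indicator_def)
  have "emeasure (gauss2 0) ?S = (\<integral>\<^sup>+(x::real^2). (ennreal (std_normal_density (x$1)) * indicator {t..t+h} (x$1)) * ennreal (std_normal_density (x$2)) \<partial>lborel)"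
    by (simp add: gauss0_emeasure[OF S] ind mult_ac)
  also have "\<dots> = (\<integral>\<^sup>+x. ennreal (std_normal_density x) * indicator {t..t+h} x \<partial>lborel) * (\<integral>\<^sup>+x. ennreal (std_normal_density x) \<partial>lborel)"
    by (rule fub2) simp_all
  also have "\<dots> = (\<integral>\<^sup>+x. ennreal (std_normal_density x) * indicator {t..t+h} x \<partial>lborel)"
    by (simp add: std_int1)
  also have "\<dots> \<le> (\<integral>\<^sup>+x. ennreal 1 * indicator {t..t+h} x \<partial>lborel)"
  proof (rule nn_integral_mono)
    fix x
    have "std_normal_density x \<le> 1" by (rule std_le1)
    then show "ennreal (std_normal_density x) * indicator {t..t+h} x \<le> ennreal 1 * indicator {t..t+h} x"
      by (intro mult_right_mono) (simp_all add: ennreal_leI)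
  qed
  also have "\<dots> = ennreal h" using assms by simp
  finally have "emeasure (gauss2 0) ?S \<le> ennreal h" .
  then have "enn2real (emeasure (gauss2 0) ?S) \<le> enn2real (ennreal h)"
    by (rule enn2real_mono) simp
  then show ?thesis unfolding gauss2_prob_def measure_def using assms by simp
qed
lemma gauss_inv:
  assumes o: "orthn p q" and A: "A \<in> sets borel"
  shows "gauss2_prob mu A = gauss2_prob 0 {z. rotm p q z + mu \<in> A}"
proof -
  let ?T = "\<lambda>z. rotm p q z + mu"
  let ?f = "\<lambda>x. ennreal (exp (- (norm (x - mu))\<^sup>2 / 2) / (2 * pi)) * indicator A x"
  have Tm: "?T \<in> borel_measurable borel" by measurable
  have B: "{z. rotm p q z + mu \<in> A} \<in> sets borel"
  proof -
    have "?T -` A \<inter> space borel \<in> sets borel" by (rule measurable_sets[OF Tm A])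
    moreover have "?T -` A \<inter> space borel = {z. rotm p q z + mu \<in> A}" by auto
    ultimately show ?thesis by simp
  qed
  note A[measurable]
  have fm: "?f \<in> borel_measurable borel" by measurable
  have "emeasure (gauss2 mu) A = (\<integral>\<^sup>+x. ?f x \<partial>lborel)"
    unfolding gauss2_def using A by (simp add: emeasure_density)
  also have "\<dots> = (\<integral>\<^sup>+x. ?f x \<partial>(distr lborel borel ?T))"
    by (simp add: lborel_rot[OF o])
  also have "\<dots> = (\<integral>\<^sup>+z. ?f (?T z) \<partial>lborel)"
    by (rule nn_integral_distr) (simp_all add: Tm fm)
  also have "\<dots> = (\<integral>\<^sup>+z. ennreal (exp (- (norm (z - 0))\<^sup>2 / 2) / (2 * pi)) * indicator {z. rotm p q z + mu \<in> A} z \<partial>lborel)"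
    by (rule nn_integral_cong) (simp add: rotm_norm[OF o] indicator_def)
  also have "\<dots> = emeasure (gauss2 0) {z. rotm p q z + mu \<in> A}"
    unfolding gauss2_def using B by (simp add: emeasure_density)
  finally show ?thesis unfolding gauss2_prob_def measure_def by simp
qed

definition perp :: "real^2 \<Rightarrow> real^2" where "perp u = vector [- u$2, u$1]"

lemma orthn_perp: "u \<bullet> u = 1 \<Longrightarrow> orthn u (perp u)"
  unfolding orthn_def perp_def by (simp add: inner2 algebra_simps)

lemma rotm_perp_inner: assumes "u \<bullet> u = 1" shows "rotm u (perp u) z \<bullet> u = z$1"
proof -
  have "rotm u (perp u) z \<bullet> u = z$1 * (u$1*u$1 + u$2*u$2)"
    unfolding perp_def rotm_def by (simp add: inner_add_left inner2 algebra_simps)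
  also have "u$1*u$1 + u$2*u$2 = 1" using assms by (simp add: inner2)
  finally show ?thesis by simp
qed

lemma gauss0_dir:
  assumes u: "u \<bullet> u = 1" and P: "Measurable.pred borel P"
  shows "gauss2_prob 0 {g. P (g \<bullet> u)} = gauss2_prob 0 {z. P (z$1)}"
proof -
  have "{g::real^2. P (g \<bullet> u)} \<in> sets borel" using P by measurable
  then have "gauss2_prob 0 {g. P (g \<bullet> u)} = gauss2_prob 0 {z. rotm u (perp u) z + 0 \<in> {g. P (g \<bullet> u)}}"
    by (rule gauss_inv[OF orthn_perp[OF u]])
  also have "\<dots> = gauss2_prob 0 {z. P (z$1)}"
    using rotm_perp_inner[OF u] by simp
  finally show ?thesis .
qed

lemma strip_dir:
  assumes u: "u \<bullet> u = 1" and h: "h \<ge> 0"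
  shows "gauss2_prob 0 {g. t \<le> g \<bullet> u \<and> g \<bullet> u \<le> t + h} \<le> h"
proof -
  have "gauss2_prob 0 {g. t \<le> g \<bullet> u \<and> g \<bullet> u \<le> t + h} = gauss2_prob 0 {z. t \<le> z$1 \<and> z$1 \<le> t + h}"
    by (rule gauss0_dir[OF u, where P = "\<lambda>x. t \<le> x \<and> x \<le> t + h"]) measurable
  then show ?thesis using strip_axis[OF h] by simp
qed
lemma half_int: "(\<integral>\<^sup>+x. ennreal (std_normal_density x) * indicator {0..} x \<partial>lborel) = ennreal (1/2)"
proof -
  let ?I = "(\<integral>\<^sup>+x. ennreal (std_normal_density x) * indicator {0..} x \<partial>lborel)"
  have "(\<integral>\<^sup>+x. ennreal (std_normal_density x) * indicator {..<0} x \<partial>lborel)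
      = ennreal \<bar>-1\<bar> * (\<integral>\<^sup>+x. ennreal (std_normal_density (0 + -1 * x)) * indicator {..<0} (0 + -1 * x) \<partial>lborel)"
    by (rule nn_integral_real_affine) simp_all
  also have "\<dots> = (\<integral>\<^sup>+x. ennreal (std_normal_density x) * indicator {0<..} x \<partial>lborel)"
    by (simp add: std_normal_density_def indicator_def)
  also have "\<dots> = ?I"
  proof (rule nn_integral_cong_AE)
    show "AE x in lborel. ennreal (std_normal_density x) * indicator {0<..} x = ennreal (std_normal_density x) * indicator {0..} x"
      using AE_lborel_singleton[of 0] by eventually_elim (auto simp: indicator_def)
  qed
  finally have eq: "(\<integral>\<^sup>+x. ennreal (std_normal_density x) * indicator {..<0} x \<partial>lborel) = ?I" .
  have "?I + (\<integral>\<^sup>+x. ennreal (std_normal_density x) * indicator {..<0} x \<partial>lborel)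
        = (\<integral>\<^sup>+x. ennreal (std_normal_density x) * indicator {0..} x + ennreal (std_normal_density x) * indicator {..<0} x \<partial>lborel)"
    by (rule nn_integral_add[symmetric]) simp_all
  also have "\<dots> = (\<integral>\<^sup>+x. ennreal (std_normal_density x) \<partial>lborel)"
    by (rule nn_integral_cong) (simp add: indicator_def)
  finally have "?I + ?I = 1" using eq std_int1 by simp
  then have "?I \<noteq> \<top>" by (metis ennreal_add_eq_top ennreal_one_neq_top)
  then obtain r where r: "?I = ennreal r" "0 \<le> r" by (cases ?I rule: ennreal_cases) auto
  with \<open>?I + ?I = 1\<close> have "ennreal (r + r) = ennreal 1" by (simp add: ennreal_plus[symmetric] del: ennreal_plus)
  then have "r + r = 1" using r(2) by (subst (asm) ennreal_inj) simp_all
  then have "r = 1/2" by simp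
  then show ?thesis using r(1) by (simp only:)
qed

lemma tail_axis:
  assumes t: "t \<ge> 0"
  shows "gauss2_prob 0 {z. t \<le> z$1} \<le> exp (- t\<^sup>2 / 2) / 2"
proof -
  let ?S = "{z::real^2. t \<le> z$1}"
  have S: "?S \<in> sets borel" by measurable
  have ind: "\<And>z::real^2. indicator ?S z = (indicator {t..} (z$1) :: ennreal)"
    by (auto simp: indicator_def)
  have "emeasure (gauss2 0) ?S = (\<integral>\<^sup>+(x::real^2). (ennreal (std_normal_density (x$1)) * indicator {t..} (x$1)) * ennreal (std_normal_density (x$2)) \<partial>lborel)"
    by (simp add: gauss0_emeasure[OF S] ind mult_ac)
  also have "\<dots> = (\<integral>\<^sup>+x. ennreal (std_normal_density x) * indicator {t..} x \<partial>lborel) * (\<integral>\<^sup>+x. ennreal (std_normal_density x) \<partial>lborel)"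
    by (rule fub2) simp_all
  also have "\<dots> = (\<integral>\<^sup>+x. ennreal (std_normal_density x) * indicator {t..} x \<partial>lborel)"
    by (simp add: std_int1)
  also have "\<dots> = ennreal \<bar>1\<bar> * (\<integral>\<^sup>+y. ennreal (std_normal_density (t + 1 * y)) * indicator {t..} (t + 1 * y) \<partial>lborel)"
    by (rule nn_integral_real_affine) simp_all
  also have "\<dots> = (\<integral>\<^sup>+y. ennreal (std_normal_density (t + y)) * indicator {0..} y \<partial>lborel)"
    by (simp add: indicator_def)
  also have "\<dots> \<le> (\<integral>\<^sup>+y. ennreal (exp (- t\<^sup>2 / 2)) * (ennreal (std_normal_density y) * indicator {0..} y) \<partial>lborel)"
  proof (rule nn_integral_mono)
    fix y :: real
    show "ennreal (std_normal_density (t + y)) * indicator {0..} y \<le> ennreal (exp (- t\<^sup>2 / 2)) * (ennreal (std_normal_density y) * indicator {0..} y)"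
    proof (cases "0 \<le> y")
      case True
      have "0 \<le> t * y" using True t by simp
      moreover have "(t + y)\<^sup>2 = t\<^sup>2 + y\<^sup>2 + 2 * (t * y)" by (simp add: power2_eq_square algebra_simps)
      ultimately have "- (t + y)\<^sup>2 / 2 \<le> - t\<^sup>2 / 2 + - y\<^sup>2 / 2"
        by linarith
      then have "exp (- (t + y)\<^sup>2 / 2) \<le> exp (- t\<^sup>2 / 2) * exp (- y\<^sup>2 / 2)"
        by (simp add: exp_add[symmetric])
      then have "std_normal_density (t + y) \<le> exp (- t\<^sup>2 / 2) * std_normal_density y"
        unfolding std_normal_density_def by (simp add: divide_right_mono mult_ac)
      then show ?thesis using True by (simp add: ennreal_mult''[symmetric] ennreal_leI)
    qed simp
  qed
  also have "\<dots> = ennreal (exp (- t\<^sup>2 / 2)) * ennreal (1/2)"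
    by (subst nn_integral_cmult) (simp_all add: half_int)
  also have "\<dots> = ennreal (exp (- t\<^sup>2 / 2) * (1/2))"
    by (rule ennreal_mult[symmetric]) simp_all
  also have "\<dots> = ennreal (exp (- t\<^sup>2 / 2) / 2)" by simp
  finally have "emeasure (gauss2 0) ?S \<le> ennreal (exp (- t\<^sup>2 / 2) / 2)" .
  then have "enn2real (emeasure (gauss2 0) ?S) \<le> enn2real (ennreal (exp (- t\<^sup>2 / 2) / 2))"
    by (rule enn2real_mono) simp
  then show ?thesis unfolding gauss2_prob_def measure_def by simp
qed

lemma tail_dir:
  assumes u: "u \<bullet> u = 1" and t: "t \<ge> 0"
  shows "gauss2_prob 0 {g. t \<le> g \<bullet> u} \<le> exp (- t\<^sup>2 / 2) / 2"
proof -
  have "gauss2_prob 0 {g. t \<le> g \<bullet> u} = gauss2_prob 0 {z. t \<le> z$1}"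
    by (rule gauss0_dir[OF u, where P = "\<lambda>x. t \<le> x"]) measurable
  then show ?thesis using tail_axis[OF t] by simp
qed
definition sq :: "real \<Rightarrow> real" where "sq r = sqrt (1 - r\<^sup>2)"
definition wv :: "real \<Rightarrow> real^2" where "wv r = vector [r, sq r]"
definition QP :: "real \<Rightarrow> real \<Rightarrow> real \<Rightarrow> real \<Rightarrow> real \<Rightarrow> real" where
  "QP a b r s1 s2 = gauss2_prob 0 {g. 0 \<le> s1 * (g$1 + a) \<and> 0 \<le> s2 * (g \<bullet> wv r + b)}"
definition PP :: "real \<Rightarrow> real \<Rightarrow> real \<Rightarrow> real" where
  "PP a b r = gauss2_prob 0 {g. -a \<le> g$1 \<and> -b \<le> g \<bullet> wv r}"

lemma QP11: "QP a b r 1 1 = PP a b r"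
proof -
  have "{g::real^2. 0 \<le> 1 * (g$1 + a) \<and> 0 \<le> 1 * (g \<bullet> wv r + b)} = {g. -a \<le> g$1 \<and> -b \<le> g \<bullet> wv r}"
    by auto
  then show ?thesis unfolding QP_def PP_def by simp
qed

lemma sq_pos: assumes "\<bar>r\<bar> < 1" shows "sq r > 0"
proof -
  have "r\<^sup>2 < 1" using assms by (simp add: abs_square_less_1)
  then show ?thesis unfolding sq_def by simp
qed

lemma sq_sq: "\<bar>r\<bar> \<le> 1 \<Longrightarrow> (sq r)\<^sup>2 = 1 - r\<^sup>2"
proof -
  assume "\<bar>r\<bar> \<le> 1"
  then have "r\<^sup>2 \<le> 1" by (simp add: abs_square_le_1)
  then show ?thesis unfolding sq_def by simp
qed

lemma wv_inner: "g \<bullet> wv r = g$1 * r + g$2 * sq r"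
  by (simp add: wv_def inner2)

lemma quad_QP:
  assumes n1: "norm v1 = 1" and n2: "norm v2 = 1" and r: "\<bar>v1 \<bullet> v2\<bar> < 1"
  shows "quad_prob mu (s1 *\<^sub>R v1) (s2 *\<^sub>R v2) = QP (v1 \<bullet> mu) (v2 \<bullet> mu) (v1 \<bullet> v2) s1 s2"
proof -
  define \<rho> where "\<rho> = v1 \<bullet> v2"
  define s where "s = sq \<rho>"
  have sp: "s > 0" using r sq_pos unfolding s_def \<rho>_def by auto
  have ss: "s\<^sup>2 = 1 - \<rho>\<^sup>2" using r sq_sq unfolding s_def \<rho>_def by auto
  define q where "q = (1/s) *\<^sub>R (v2 - \<rho> *\<^sub>R v1)"
  have v11: "v1 \<bullet> v1 = 1" using n1 by (simp add: norm_eq_1)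
  have v22: "v2 \<bullet> v2 = 1" using n2 by (simp add: norm_eq_1)
  have v21: "v2 \<bullet> v1 = \<rho>" unfolding \<rho>_def by (simp add: inner_commute)
  have qv1: "q \<bullet> v1 = 0" "v1 \<bullet> q = 0" unfolding q_def using v11 v21 \<rho>_def
    by (simp_all add: inner_diff_left inner_diff_right)
  have qv2: "q \<bullet> v2 = s"
  proof -
    have "q \<bullet> v2 = (1 - \<rho>\<^sup>2) / s" unfolding q_def using v22 \<rho>_def
      by (simp add: inner_diff_left power2_eq_square)
    also have "\<dots> = s * s / s" using ss by (simp add: power2_eq_square)
    also have "\<dots> = s" using sp by simp
    finally show ?thesis .
  qed
  have qq: "q \<bullet> q = 1"
  proof -
    have "q \<bullet> q = ((1/s) *\<^sub>R (v2 - \<rho> *\<^sub>R v1)) \<bullet> q" by (subst (1) q_def) (rule refl)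
    also have "\<dots> = (1/s) * (v2 \<bullet> q - \<rho> * (v1 \<bullet> q))"
      by (simp only: inner_scaleR_left inner_diff_left)
    also have "\<dots> = (1/s) * (q \<bullet> v2 - \<rho> * (q \<bullet> v1))" by (simp only: inner_commute)
    also have "\<dots> = 1" using qv1 qv2 sp by simp
    finally show ?thesis .
  qed
  have o: "orthn v1 q" unfolding orthn_def using v11 qq qv1 by simp
  let ?Q = "{x. x \<bullet> (s1 *\<^sub>R v1) \<ge> 0 \<and> x \<bullet> (s2 *\<^sub>R v2) \<ge> 0}"
  have Qm: "?Q \<in> sets borel" by measurable
  have "quad_prob mu (s1 *\<^sub>R v1) (s2 *\<^sub>R v2) = gauss2_prob 0 {z. rotm v1 q z + mu \<in> ?Q}"
    unfolding quad_prob_def by (rule gauss_inv[OF o Qm])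
  also have "{z. rotm v1 q z + mu \<in> ?Q} = {g. 0 \<le> s1 * (g$1 + v1 \<bullet> mu) \<and> 0 \<le> s2 * (g \<bullet> wv \<rho> + v2 \<bullet> mu)}"
  proof -
    have e1: "(rotm v1 q z + mu) \<bullet> v1 = z$1 + mu \<bullet> v1" for z
      by (simp add: rotm_def inner_add_left v11 qv1)
    have e2: "(rotm v1 q z + mu) \<bullet> v2 = z$1 * \<rho> + z$2 * s + mu \<bullet> v2" for z
      by (simp add: rotm_def inner_add_left qv2 \<rho>_def)
    have e3: "z \<bullet> wv \<rho> = z$1 * \<rho> + z$2 * s" for z by (simp add: wv_inner s_def)
    show ?thesis using e1 e2 e3 by (auto simp: inner_commute)
  qed
  finally show ?thesis unfolding QP_def \<rho>_def .
qed
lemma rotm_linear: "linear (rotm X Y)"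
  by (rule linearI) (auto simp: rotm_def algebra_simps)

lemma det_rotm: "det (matrix (rotm X Y)) = X$1 * Y$2 - X$2 * Y$1"
  by (simp add: det_2 matrix_def rotm_def axis_def)

lemma box01_measure: "measure lebesgue (box (0::real^2) (vector [1,1])) = 1"
proof -
  have "measure lebesgue (box (0::real^2) (vector [1,1])) = measure lborel (box (0::real^2) (vector [1,1]))" by simp
  also have "\<dots> = 1" unfolding measure_lborel_box_eq Basis_vec2
    using axis_neq2 by (simp add: inner_axis)
  finally show ?thesis .
qed
lemma mem_box01: assumes "z \<in> box (0::real^2) (vector [1,1])" shows "0 < z$1 \<and> z$1 < 1 \<and> 0 < z$2 \<and> z$2 < 1"
proof -
  have h: "\<forall>i. 0 < z $ i \<and> z $ i < (vector [1, 1]::real^2) $ i" using assms by (simp add: mem_box_cart)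
  have "0 < z $ 1 \<and> z $ 1 < (vector [1, 1]::real^2) $ 1" using h by blast
  moreover have "0 < z $ 2 \<and> z $ 2 < (vector [1, 1]::real^2) $ 2" using h by blast
  ultimately show ?thesis by simp
qed

lemma para_lb:
  assumes R: "R \<in> sets borel"
    and sub: "\<And>\<alpha> \<beta>. 0 < \<alpha> \<Longrightarrow> \<alpha> < 1 \<Longrightarrow> 0 < \<beta> \<Longrightarrow> \<beta> < 1 \<Longrightarrow> c + \<alpha> *\<^sub>R X + \<beta> *\<^sub>R Y \<in> R"
    and nX: "norm X \<le> 1" and nY: "norm Y \<le> 1"
  shows "exp (- (norm c + 2)\<^sup>2 / 2) / (2 * pi) * \<bar>X$1 * Y$2 - X$2 * Y$1\<bar> \<le> gauss2_prob 0 R"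
proof -
  let ?m = "exp (- (norm c + 2)\<^sup>2 / 2) / (2 * pi)"
  let ?f = "\<lambda>x. ennreal (exp (- (norm (x - 0))\<^sup>2 / 2) / (2 * pi))"
  define K where "K = (+) c ` (rotm X Y ` box (0::real^2) (vector [1,1]))"
  have lK: "K \<in> lmeasurable" unfolding K_def
    by (intro measurable_translation measurable_linear_image[OF rotm_linear]) simp
  have mK: "measure lebesgue K = \<bar>X$1 * Y$2 - X$2 * Y$1\<bar>"
    unfolding K_def measure_translation
    by (simp add: measure_linear_image[OF rotm_linear] det_rotm box01_measure)
  have KR: "K \<subseteq> R"
  proof
    fix g assume "g \<in> K"
    then obtain z where z: "z \<in> box (0::real^2) (vector [1,1])" "g = c + rotm X Y z" unfolding K_def by auto
    then have "0 < z$1" "z$1 < 1" "0 < z$2" "z$2 < 1" using mem_box01 by auto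
    then show "g \<in> R" using sub z(2) by (simp add: rotm_def add.assoc)
  qed
  have dens: "ennreal ?m * indicator K x \<le> ?f x * indicator R x" for x
  proof (cases "x \<in> K")
    case True
    then obtain z where z: "z \<in> box (0::real^2) (vector [1,1])" "x = c + rotm X Y z" unfolding K_def by auto
    then have z1: "0 < z$1" "z$1 < 1" "0 < z$2" "z$2 < 1" using mem_box01 by auto
    have "norm x \<le> norm c + norm (z$1 *\<^sub>R X) + norm (z$2 *\<^sub>R Y)"
      unfolding z(2) rotm_def
      using norm_triangle_ineq[of c "z$1 *\<^sub>R X + z$2 *\<^sub>R Y"] norm_triangle_ineq[of "z$1 *\<^sub>R X" "z$2 *\<^sub>R Y"]
      by (simp add: add.assoc)
    also have "norm (z$1 *\<^sub>R X) \<le> 1" using z1 nX by (simp add: mult_le_one)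
    also have "norm (z$2 *\<^sub>R Y) \<le> 1" using z1 nY by (simp add: mult_le_one)
    finally have nx: "norm x \<le> norm c + 2" by simp
    then have "(norm x)\<^sup>2 \<le> (norm c + 2)\<^sup>2" by (simp add: power_mono)
    then have "exp (- (norm c + 2)\<^sup>2 / 2) \<le> exp (- (norm x)\<^sup>2 / 2)" by simp
    then have "?m \<le> exp (- (norm (x - 0))\<^sup>2 / 2) / (2 * pi)" by (simp add: divide_right_mono)
    then show ?thesis using True KR by (auto simp: ennreal_leI)
  qed simp
  have "emeasure (gauss2 0) R = (\<integral>\<^sup>+x. ?f x * indicator R x \<partial>lborel)"
    unfolding gauss2_def using R by (simp add: emeasure_density)
  also have "\<dots> = (\<integral>\<^sup>+x. ?f x * indicator R x \<partial>lebesgue)"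
    by (simp add: nn_integral_completion)
  also have "\<dots> \<ge> (\<integral>\<^sup>+x. ennreal ?m * indicator K x \<partial>lebesgue)"
    by (rule nn_integral_mono) (rule dens)
  also have "(\<integral>\<^sup>+x. ennreal ?m * indicator K x \<partial>lebesgue) = ennreal ?m * emeasure lebesgue K"
    using lK by (simp add: nn_integral_cmult_indicator fmeasurable_def)
  also have "\<dots> = ennreal ?m * ennreal \<bar>X$1 * Y$2 - X$2 * Y$1\<bar>"
    using lK mK by (simp add: emeasure_eq_measure2)
  also have "\<dots> = ennreal (?m * \<bar>X$1 * Y$2 - X$2 * Y$1\<bar>)"
    by (rule ennreal_mult[symmetric]) simp_all
  finally have "ennreal (?m * \<bar>X$1 * Y$2 - X$2 * Y$1\<bar>) \<le> emeasure (gauss2 0) R" .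
  moreover have "emeasure (gauss2 0) R \<noteq> \<top>"
    using prob_space.emeasure_le_1[OF gauss0_prob, of R] by (metis ennreal_one_neq_top neq_top_trans)
  ultimately have "enn2real (ennreal (?m * \<bar>X$1 * Y$2 - X$2 * Y$1\<bar>)) \<le> enn2real (emeasure (gauss2 0) R)"
    by (intro enn2real_mono) (simp_all add: less_top)
  then show ?thesis unfolding gauss2_prob_def measure_def by simp
qed
lemma D_pos:
  assumes "-1 < r1" "r1 < r2" "r2 < 1"
  shows "0 < r2 * sq r1 - r1 * sq r2"
proof -
  have a: "sq r1 > 0" "sq r2 > 0" using assms by (auto intro!: sq_pos)
  have a2: "(sq r1)\<^sup>2 = 1 - r1\<^sup>2" "(sq r2)\<^sup>2 = 1 - r2\<^sup>2" using assms by (auto intro!: sq_sq)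
  have key: "(r2 * sq r1)\<^sup>2 - (r1 * sq r2)\<^sup>2 = r2\<^sup>2 - r1\<^sup>2"
    by (simp add: power_mult_distrib a2 algebra_simps)
  consider "r1 < 0" "0 \<le> r2" | "0 \<le> r1" | "r2 < 0" by linarith
  then show ?thesis
  proof cases
    case 1
    then have "r1 * sq r2 < 0" "0 \<le> r2 * sq r1" using a by (simp_all add: mult_neg_pos)
    then show ?thesis by linarith
  next
    case 2
    then have "r1\<^sup>2 < r2\<^sup>2" using assms by (simp add: power_strict_mono)
    then have "(r1 * sq r2)\<^sup>2 < (r2 * sq r1)\<^sup>2" using key by linarith
    moreover have "0 \<le> r2 * sq r1" using 2 assms a by simp
    ultimately have "r1 * sq r2 < r2 * sq r1" by (rule power2_less_imp_less)
    then show ?thesis by linarith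
  next
    case 3
    then have "r2\<^sup>2 < r1\<^sup>2" using assms
      by (metis neg_less_iff_less power2_minus power_strict_mono zero_le_numeral less_eq_real_def neg_0_less_iff_less zero_less_numeral)
    then have "(- (r2 * sq r1))\<^sup>2 < (- (r1 * sq r2))\<^sup>2" using key by simp
    moreover have "0 \<le> - (r1 * sq r2)" using 3 assms a by (simp add: mult_nonpos_nonneg)
    ultimately have "- (r2 * sq r1) < - (r1 * sq r2)" by (rule power2_less_imp_less)
    then show ?thesis by linarith
  qed
qed

lemma wv_nth: "wv r $ 1 = r" "wv r $ 2 = sq r" by (simp_all add: wv_def)

lemma wv_unit: "\<bar>r\<bar> < 1 \<Longrightarrow> wv r \<bullet> wv r = 1"
  using sq_sq[of r] by (simp add: wv_inner wv_nth power2_eq_square algebra_simps)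

lemma refl_eq:
  assumes r1: "\<bar>r1\<bar> < 1" and r2: "\<bar>r2\<bar> < 1"
  shows "gauss2_prob 0 {g. -t \<le> g \<bullet> wv r1 \<and> \<not> -t \<le> g \<bullet> wv r2} = gauss2_prob 0 {g. -t \<le> g \<bullet> wv r2 \<and> \<not> -t \<le> g \<bullet> wv r1}"
proof -
  define ca where "ca = sq r1"
  define cb where "cb = sq r2"
  have e1: "r1\<^sup>2 + ca\<^sup>2 = 1" using sq_sq[of r1] r1 unfolding ca_def by simp
  have e2: "r2\<^sup>2 + cb\<^sup>2 = 1" using sq_sq[of r2] r2 unfolding cb_def by simp
  define p where "p = (vector [r1*r2 - ca*cb, ca*r2 + r1*cb] :: real^2)"
  define q where "q = (vector [ca*r2 + r1*cb, -(r1*r2 - ca*cb)] :: real^2)"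
  have pp: "p \<bullet> p = (r1\<^sup>2 + ca\<^sup>2) * (r2\<^sup>2 + cb\<^sup>2)"
    unfolding p_def by (simp add: inner2 power2_eq_square algebra_simps)
  have qq: "q \<bullet> q = (r1\<^sup>2 + ca\<^sup>2) * (r2\<^sup>2 + cb\<^sup>2)"
    unfolding q_def by (simp add: inner2 power2_eq_square algebra_simps)
  have pq: "p \<bullet> q = 0" unfolding p_def q_def by (simp add: inner2 algebra_simps)
  have o: "orthn p q" unfolding orthn_def using pp qq pq e1 e2 by simp
  have i1: "rotm p q z \<bullet> wv r1 = z$1 * r2 * (r1\<^sup>2 + ca\<^sup>2) + z$2 * cb * (r1\<^sup>2 + ca\<^sup>2)" for z
    unfolding p_def q_def ca_def by (simp add: rotm_def wv_inner power2_eq_square algebra_simps)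
  have i2: "rotm p q z \<bullet> wv r2 = z$1 * r1 * (r2\<^sup>2 + cb\<^sup>2) + z$2 * ca * (r2\<^sup>2 + cb\<^sup>2)" for z
    unfolding p_def q_def cb_def by (simp add: rotm_def wv_inner power2_eq_square algebra_simps)
  have j1: "rotm p q z \<bullet> wv r1 = z \<bullet> wv r2" for z using i1[of z] e1 by (simp add: wv_inner cb_def)
  have j2: "rotm p q z \<bullet> wv r2 = z \<bullet> wv r1" for z using i2[of z] e2 by (simp add: wv_inner ca_def)
  have B: "{g::real^2. -t \<le> g \<bullet> wv r1 \<and> \<not> -t \<le> g \<bullet> wv r2} \<in> sets borel" by measurable
  have "gauss2_prob 0 {g. -t \<le> g \<bullet> wv r1 \<and> \<not> -t \<le> g \<bullet> wv r2}
      = gauss2_prob 0 {z. rotm p q z + 0 \<in> {g. -t \<le> g \<bullet> wv r1 \<and> \<not> -t \<le> g \<bullet> wv r2}}"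
    by (rule gauss_inv[OF o B])
  also have "\<dots> = gauss2_prob 0 {g. -t \<le> g \<bullet> wv r2 \<and> \<not> -t \<le> g \<bullet> wv r1}"
    using j1 j2 by simp
  finally show ?thesis .
qed

lemma gsplit:
  assumes "X \<in> sets borel" "Y \<in> sets borel"
  shows "gauss2_prob 0 X = gauss2_prob 0 (X \<inter> Y) + gauss2_prob 0 (X - Y)"
proof -
  interpret prob_space "gauss2 0" by (rule gauss0_prob)
  have "measure (gauss2 0) ((X \<inter> Y) \<union> (X - Y)) = measure (gauss2 0) (X \<inter> Y) + measure (gauss2 0) ((X - Y) - (X \<inter> Y))"
    by (rule finite_measure_Union') (use assms in auto)
  moreover have "(X \<inter> Y) \<union> (X - Y) = X" "(X - Y) - (X \<inter> Y) = X - Y" by auto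
  ultimately show ?thesis unfolding gauss2_prob_def by simp
qed
definition HA :: "real \<Rightarrow> (real^2) set" where "HA a = {g. -a \<le> g$1}"
definition HW :: "real \<Rightarrow> real \<Rightarrow> (real^2) set" where "HW t r = {g. -t \<le> g \<bullet> wv r}"
definition corner :: "real \<Rightarrow> real \<Rightarrow> real \<Rightarrow> real^2" where
  "corner a t r = vector [-a, (a * r - t) / sq r]"

lemma HA_sets[measurable]: "HA a \<in> sets borel" unfolding HA_def by measurable
lemma HW_sets[measurable]: "HW t r \<in> sets borel" unfolding HW_def by measurable

lemma PP_alt: "PP a t r = gauss2_prob 0 (HA a \<inter> HW t r)"
  unfolding PP_def HA_def HW_def by (simp add: Collect_conj_eq)

lemma net_eq:
  "PP a t r2 - PP a t r1 = gauss2_prob 0 (HA a \<inter> (HW t r2 - HW t r1)) - gauss2_prob 0 (HA a \<inter> (HW t r1 - HW t r2))"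
proof -
  have "PP a t r2 = gauss2_prob 0 (HA a \<inter> HW t r2 \<inter> HW t r1) + gauss2_prob 0 (HA a \<inter> HW t r2 - HW t r1)"
    unfolding PP_alt by (rule gsplit) simp_all
  moreover have "PP a t r1 = gauss2_prob 0 (HA a \<inter> HW t r1 \<inter> HW t r2) + gauss2_prob 0 (HA a \<inter> HW t r1 - HW t r2)"
    unfolding PP_alt by (rule gsplit) simp_all
  moreover have "HA a \<inter> HW t r2 \<inter> HW t r1 = HA a \<inter> HW t r1 \<inter> HW t r2" by auto
  moreover have "HA a \<inter> HW t r2 - HW t r1 = HA a \<inter> (HW t r2 - HW t r1)" by auto
  moreover have "HA a \<inter> HW t r1 - HW t r2 = HA a \<inter> (HW t r1 - HW t r2)" by auto
  ultimately show ?thesis by simp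
qed

lemma refl_HW: "\<bar>r1\<bar> < 1 \<Longrightarrow> \<bar>r2\<bar> < 1 \<Longrightarrow> gauss2_prob 0 (HW t r1 - HW t r2) = gauss2_prob 0 (HW t r2 - HW t r1)"
  using refl_eq[of r1 r2 t] unfolding HW_def by (simp add: set_diff_eq)

lemma net_case1:
  "HA a \<inter> (HW t r1 - HW t r2) = {} \<Longrightarrow> PP a t r2 - PP a t r1 = gauss2_prob 0 (HA a \<inter> (HW t r2 - HW t r1))"
  using net_eq[of a t r2 r1] by (simp add: gauss2_prob_def)

lemma net_case2:
  assumes r: "\<bar>r1\<bar> < 1" "\<bar>r2\<bar> < 1" and sub: "HW t r2 - HW t r1 \<subseteq> HA a"
  shows "PP a t r2 - PP a t r1 = gauss2_prob 0 ((HW t r1 - HW t r2) - HA a)"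
proof -
  have "HA a \<inter> (HW t r2 - HW t r1) = HW t r2 - HW t r1" using sub by auto
  then have "gauss2_prob 0 (HA a \<inter> (HW t r2 - HW t r1)) = gauss2_prob 0 (HW t r1 - HW t r2)"
    using refl_HW[OF r, of t] by simp
  also have "\<dots> = gauss2_prob 0 ((HW t r1 - HW t r2) \<inter> HA a) + gauss2_prob 0 ((HW t r1 - HW t r2) - HA a)"
    by (rule gsplit) simp_all
  finally show ?thesis using net_eq[of a t r2 r1] by (simp add: Int_commute)
qed

lemma DN_bound:
  assumes "-1 < r1" "r1 < r2" "r2 < 1"
  shows "(r2 - r1) / 2 \<le> (r2 * sq r1 - r1 * sq r2) / norm (vector [sq r2 + sq r1, - r2 - r1] :: real^2)"
    and "0 < norm (vector [sq r2 + sq r1, - r2 - r1] :: real^2)"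
proof -
  define ca where "ca = sq r1"
  define cb where "cb = sq r2"
  define D where "D = r2 * ca - r1 * cb"
  define X where "X = r1 * r2 + ca * cb"
  define N where "N = norm (vector [cb + ca, - r2 - r1] :: real^2)"
  have ca: "ca > 0" "ca\<^sup>2 = 1 - r1\<^sup>2" using assms sq_pos sq_sq unfolding ca_def by auto
  have cb: "cb > 0" "cb\<^sup>2 = 1 - r2\<^sup>2" using assms sq_pos sq_sq unfolding cb_def by auto
  have Dp: "D > 0" using D_pos[OF assms] unfolding D_def ca_def cb_def .
  have N2: "N\<^sup>2 = (cb + ca)\<^sup>2 + (r2 + r1)\<^sup>2" unfolding N_def power2_norm_eq_inner by (simp add: inner2 power2_eq_square algebra_simps)
  have Npos: "N > 0" unfolding N_def using ca cb by (simp add: vec_eq_iff forall_2)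
  have N2': "N\<^sup>2 = 2 + 2 * X"
  proof -
    have "N\<^sup>2 = (r1\<^sup>2 + ca\<^sup>2) + (r2\<^sup>2 + cb\<^sup>2) + 2 * X" unfolding N2 X_def by (simp add: power2_eq_square algebra_simps)
    then show ?thesis using ca cb by simp
  qed
  have D2: "D\<^sup>2 = 1 - X\<^sup>2"
  proof -
    have "D\<^sup>2 + X\<^sup>2 = (r1\<^sup>2 + ca\<^sup>2) * (r2\<^sup>2 + cb\<^sup>2)" unfolding D_def X_def by (simp add: power2_eq_square algebra_simps)
    then show ?thesis using ca cb by simp
  qed
  have R: "(r2 - r1)\<^sup>2 \<le> 2 - 2 * X"
  proof -
    have "(r2 - r1)\<^sup>2 + (ca - cb)\<^sup>2 = (r1\<^sup>2 + ca\<^sup>2) + (r2\<^sup>2 + cb\<^sup>2) - 2 * X" unfolding X_def by (simp add: power2_eq_square algebra_simps)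
    then have "(r2 - r1)\<^sup>2 + (ca - cb)\<^sup>2 = 2 - 2 * X" using ca cb by simp
    moreover have "0 \<le> (ca - cb)\<^sup>2" by simp
    ultimately show ?thesis by linarith
  qed
  have "0 \<le> N\<^sup>2" by simp
  then have nn: "0 \<le> 2 + 2 * X" using N2' by simp
  have "(r2 - r1)\<^sup>2 * (2 + 2 * X) \<le> (2 - 2 * X) * (2 + 2 * X)" by (rule mult_right_mono[OF R nn])
  also have "\<dots> = 4 * D\<^sup>2" using D2 by (simp add: power2_eq_square algebra_simps)
  finally have "((r2 - r1) * N)\<^sup>2 \<le> (2 * D)\<^sup>2" using N2' by (simp add: power_mult_distrib)
  moreover have "0 \<le> 2 * D" using Dp by simp
  ultimately have "(r2 - r1) * N \<le> 2 * D" by (rule power2_le_imp_le)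
  then have "(r2 - r1) / 2 * N \<le> D" by simp
  then have "(r2 - r1) / 2 \<le> D / N" by (simp add: pos_le_divide_eq[OF Npos])
  then show "(r2 - r1) / 2 \<le> (r2 * sq r1 - r1 * sq r2) / norm (vector [sq r2 + sq r1, - r2 - r1] :: real^2)"
    unfolding D_def N_def ca_def cb_def .
  show "0 < norm (vector [sq r2 + sq r1, - r2 - r1] :: real^2)" using Npos unfolding N_def ca_def cb_def .
qed
lemma geom:
  assumes r: "-1 < r1" "r1 < r2" "r2 < 1"
  defines "D \<equiv> r2 * sq r1 - r1 * sq r2"
    and "N \<equiv> norm (vector [sq r2 + sq r1, - r2 - r1] :: real^2)"
    and "u \<equiv> (1 / norm (vector [sq r2 + sq r1, - r2 - r1] :: real^2)) *\<^sub>R (vector [sq r2 + sq r1, - r2 - r1] :: real^2)"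
    and "d1v \<equiv> (vector [sq r2, - r2] :: real^2)"
    and "d2v \<equiv> (vector [sq r1, - r1] :: real^2)"
  shows "D > 0" "N > 0" "(r2 - r1) / 2 \<le> D / N"
    "u \<bullet> wv r1 = - D / N" "u \<bullet> wv r2 = D / N" "u $ 1 \<ge> 0" "norm u = 1"
    "d1v \<bullet> wv r1 = - D" "d1v \<bullet> wv r2 = 0" "d1v $ 1 > 0" "norm d1v = 1"
    "d2v \<bullet> wv r1 = 0" "d2v \<bullet> wv r2 = D" "d2v $ 1 > 0" "norm d2v = 1"
    "\<bar>u$1 * d2v$2 - u$2 * d2v$1\<bar> = D / N"
    "\<bar>u$1 * d1v$2 - u$2 * d1v$1\<bar> = D / N"
    "\<And>g c. D * (g$1 - c$1) = sq r1 * (g \<bullet> wv r2 - c \<bullet> wv r2) - sq r2 * (g \<bullet> wv r1 - c \<bullet> wv r1)"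
proof -
  have ca: "sq r1 > 0" "(sq r1)\<^sup>2 = 1 - r1\<^sup>2" using r sq_pos[of r1] sq_sq[of r1] by simp_all
  have cb: "sq r2 > 0" "(sq r2)\<^sup>2 = 1 - r2\<^sup>2" using r sq_pos[of r2] sq_sq[of r2] by simp_all
  show Dp: "D > 0" unfolding D_def by (rule D_pos[OF r])
  show Np: "N > 0" unfolding N_def by (rule DN_bound(2)[OF r])
  show "(r2 - r1) / 2 \<le> D / N" unfolding D_def N_def by (rule DN_bound(1)[OF r])
  show "u \<bullet> wv r1 = - D / N" unfolding u_def D_def N_def[symmetric] by (simp add: wv_inner algebra_simps diff_divide_distrib add_divide_distrib)
  show "u \<bullet> wv r2 = D / N" unfolding u_def D_def N_def[symmetric] by (simp add: wv_inner algebra_simps diff_divide_distrib add_divide_distrib)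
  show "u $ 1 \<ge> 0" unfolding u_def N_def[symmetric] using ca cb Np by simp
  show "norm u = 1" using Np unfolding u_def N_def by simp
  show "d1v \<bullet> wv r1 = - D" "d1v \<bullet> wv r2 = 0" unfolding d1v_def D_def by (simp_all add: wv_inner algebra_simps)
  show "d2v \<bullet> wv r1 = 0" "d2v \<bullet> wv r2 = D" unfolding d2v_def D_def by (simp_all add: wv_inner algebra_simps)
  show "d1v $ 1 > 0" "d2v $ 1 > 0" unfolding d1v_def d2v_def using ca cb by simp_all
  have "(norm d1v)\<^sup>2 = (sq r2)\<^sup>2 + r2\<^sup>2" unfolding d1v_def power2_norm_eq_inner by (simp add: inner2 power2_eq_square)
  then have "(norm d1v)\<^sup>2 = 1\<^sup>2" using cb by simp
  then show "norm d1v = 1" by (rule power2_eq_imp_eq) simp_all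
  have "(norm d2v)\<^sup>2 = (sq r1)\<^sup>2 + r1\<^sup>2" unfolding d2v_def power2_norm_eq_inner by (simp add: inner2 power2_eq_square)
  then have "(norm d2v)\<^sup>2 = 1\<^sup>2" using ca by simp
  then show "norm d2v = 1" by (rule power2_eq_imp_eq) simp_all
  have "u$1 * d2v$2 - u$2 * d2v$1 = D / N" unfolding u_def d2v_def D_def N_def[symmetric]
    by (simp add: algebra_simps diff_divide_distrib add_divide_distrib)
  then show "\<bar>u$1 * d2v$2 - u$2 * d2v$1\<bar> = D / N" using Dp Np by simp
  have "u$1 * d1v$2 - u$2 * d1v$1 = - (D / N)" unfolding u_def d1v_def D_def N_def[symmetric]
    by (simp add: algebra_simps diff_divide_distrib add_divide_distrib)
  then show "\<bar>u$1 * d1v$2 - u$2 * d1v$1\<bar> = D / N" using Dp Np by simp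
  show "D * (g$1 - c$1) = sq r1 * (g \<bullet> wv r2 - c \<bullet> wv r2) - sq r2 * (g \<bullet> wv r1 - c \<bullet> wv r1)" for g c :: "real^2"
    unfolding D_def by (simp add: wv_inner algebra_simps)
qed
lemma corner_facts:
  assumes "\<bar>r\<bar> < 1"
  shows "corner a t r $ 1 = -a" "corner a t r \<bullet> wv r = -t"
proof -
  have "sq r > 0" using sq_pos[OF assms] .
  then have e: "(a * r - t) / sq r * sq r = a * r - t" by simp
  show "corner a t r $ 1 = -a" by (simp add: corner_def)
  have "corner a t r \<bullet> wv r = -a * r + (a * r - t) / sq r * sq r" by (simp add: corner_def wv_inner)
  then show "corner a t r \<bullet> wv r = -t" using e by simp
qed

lemma sens1:
  assumes r: "-1 < r1" "r1 < r2" "r2 < 1"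
  shows "exp (- (norm (corner a t r1) + 2)\<^sup>2 / 2) / (2 * pi) * ((r2 - r1) / 2) \<le> PP a t r2 - PP a t r1"
proof -
  define D where "D = r2 * sq r1 - r1 * sq r2"
  define N where "N = norm (vector [sq r2 + sq r1, - r2 - r1] :: real^2)"
  define u where "u = (1 / N) *\<^sub>R (vector [sq r2 + sq r1, - r2 - r1] :: real^2)"
  define d1v where "d1v = (vector [sq r2, - r2] :: real^2)"
  define d2v where "d2v = (vector [sq r1, - r1] :: real^2)"
  note G = geom[OF r, folded D_def N_def, folded u_def d1v_def d2v_def]
  define c where "c = corner a t r1"
  define m where "m = exp (- (norm c + 2)\<^sup>2 / 2) / (2 * pi)"
  have m0: "m \<ge> 0" unfolding m_def by simp
  have ca: "sq r1 > 0" "sq r2 > 0" using r sq_pos by auto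
  have c1: "c $ 1 = -a" and cw1: "c \<bullet> wv r1 = -t" using corner_facts[of r1 a t] r unfolding c_def by auto
  have DN: "(r2 - r1) / 2 \<le> D / N" by (rule G(3))
  have "m * (D / N) \<le> PP a t r2 - PP a t r1"
  proof (cases "-t \<le> c \<bullet> wv r2")
    case True
    have E: "HA a \<inter> (HW t r1 - HW t r2) = {}"
    proof (rule ccontr)
      assume "HA a \<inter> (HW t r1 - HW t r2) \<noteq> {}"
      then obtain g where g: "-a \<le> g$1" "-t \<le> g \<bullet> wv r1" "\<not> -t \<le> g \<bullet> wv r2"
        unfolding HA_def HW_def by auto
      have "0 \<le> D * (g$1 - c$1)" using G(1) g(1) c1 by simp
      moreover have "sq r1 * (g \<bullet> wv r2 - c \<bullet> wv r2) < 0" using ca g(3) True by (intro mult_pos_neg) auto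
      moreover have "0 \<le> sq r2 * (g \<bullet> wv r1 - c \<bullet> wv r1)" using ca g(2) cw1 by simp
      ultimately show False using G(18)[of g c] by linarith
    qed
    have "m * \<bar>u$1 * d2v$2 - u$2 * d2v$1\<bar> \<le> gauss2_prob 0 (HA a \<inter> (HW t r2 - HW t r1))"
      unfolding m_def
    proof (rule para_lb)
      fix \<alpha> \<beta> :: real assume ab: "0 < \<alpha>" "\<alpha> < 1" "0 < \<beta>" "\<beta> < 1"
      let ?g = "c + \<alpha> *\<^sub>R u + \<beta> *\<^sub>R d2v"
      have g1: "?g $ 1 = -a + \<alpha> * u$1 + \<beta> * d2v$1" using c1 by simp
      have gw1: "?g \<bullet> wv r1 = -t + \<alpha> * (- D / N)" using cw1 G(4) G(12) by (simp add: inner_add_left inner_diff_left)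
      have gw2: "?g \<bullet> wv r2 = c \<bullet> wv r2 + \<alpha> * (D / N) + \<beta> * D" using G(5) G(13) by (simp add: inner_add_left inner_diff_left)
      have "0 \<le> \<alpha> * u$1" "0 \<le> \<beta> * d2v$1" using ab G(6) G(14) by simp_all
      then have A: "-a \<le> ?g $ 1" using g1 by linarith
      have "0 < \<alpha> * (D / N)" using ab G(1) G(2) by simp
      then have B: "\<not> -t \<le> ?g \<bullet> wv r1" using gw1 by simp
      have "0 \<le> \<beta> * D" using ab G(1) by simp
      then have C: "-t \<le> ?g \<bullet> wv r2" using gw2 True \<open>0 < \<alpha> * (D / N)\<close> by linarith
      show "?g \<in> HA a \<inter> (HW t r2 - HW t r1)" using A B C unfolding HA_def HW_def by simp
    qed (simp_all add: G(7) G(15))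
    then show ?thesis using net_case1[OF E] G(16) by simp
  next
    case False
    have S: "HW t r2 - HW t r1 \<subseteq> HA a"
    proof
      fix g assume "g \<in> HW t r2 - HW t r1"
      then have g: "-t \<le> g \<bullet> wv r2" "\<not> -t \<le> g \<bullet> wv r1" unfolding HW_def by auto
      have "0 < sq r1 * (g \<bullet> wv r2 - c \<bullet> wv r2)" using ca g(1) False by (intro mult_pos_pos) auto
      moreover have "sq r2 * (g \<bullet> wv r1 - c \<bullet> wv r1) < 0" using ca g(2) cw1 by (intro mult_pos_neg) auto
      ultimately have "0 < D * (g$1 - c$1)" using G(18)[of g c] by linarith
      then have "0 < g$1 - c$1" using G(1) by (simp add: zero_less_mult_iff)
      then show "g \<in> HA a" unfolding HA_def using c1 by simp
    qed
    have rr: "\<bar>r1\<bar> < 1" "\<bar>r2\<bar> < 1" using r by auto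
    have "m * \<bar>(-u)$1 * (-d2v)$2 - (-u)$2 * (-d2v)$1\<bar> \<le> gauss2_prob 0 ((HW t r1 - HW t r2) - HA a)"
      unfolding m_def
    proof (rule para_lb)
      fix \<alpha> \<beta> :: real assume ab: "0 < \<alpha>" "\<alpha> < 1" "0 < \<beta>" "\<beta> < 1"
      let ?g = "c + \<alpha> *\<^sub>R (-u) + \<beta> *\<^sub>R (-d2v)"
      have g1: "?g $ 1 = -a - \<alpha> * u$1 - \<beta> * d2v$1" using c1 by simp
      have gw1: "?g \<bullet> wv r1 = -t + \<alpha> * (D / N)" using cw1 G(4) G(12) by (simp add: inner_add_left inner_diff_left)
      have gw2: "?g \<bullet> wv r2 = c \<bullet> wv r2 - \<alpha> * (D / N) - \<beta> * D" using G(5) G(13) by (simp add: inner_add_left inner_diff_left)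
      have "0 \<le> \<alpha> * u$1" "0 < \<beta> * d2v$1" using ab G(6) G(14) by simp_all
      then have A: "\<not> -a \<le> ?g $ 1" using g1 by linarith
      have "0 < \<alpha> * (D / N)" using ab G(1) G(2) by simp
      then have B: "-t \<le> ?g \<bullet> wv r1" using gw1 by simp
      have "0 \<le> \<beta> * D" using ab G(1) by simp
      then have C: "\<not> -t \<le> ?g \<bullet> wv r2" using gw2 False \<open>0 < \<alpha> * (D / N)\<close> by linarith
      show "?g \<in> (HW t r1 - HW t r2) - HA a" using A B C unfolding HA_def HW_def by simp
    qed (simp_all add: G(7) G(15))
    then show ?thesis using net_case2[OF rr S] G(16) by simp
  qed
  moreover have "m * ((r2 - r1) / 2) \<le> m * (D / N)" using DN m0 by (rule mult_left_mono)
  ultimately show ?thesis unfolding m_def c_def by linarith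
qed
lemma sens2:
  assumes r: "-1 < r1" "r1 < r2" "r2 < 1"
  shows "exp (- (norm (corner a t r2) + 2)\<^sup>2 / 2) / (2 * pi) * ((r2 - r1) / 2) \<le> PP a t r2 - PP a t r1"
proof -
  define D where "D = r2 * sq r1 - r1 * sq r2"
  define N where "N = norm (vector [sq r2 + sq r1, - r2 - r1] :: real^2)"
  define u where "u = (1 / N) *\<^sub>R (vector [sq r2 + sq r1, - r2 - r1] :: real^2)"
  define d1v where "d1v = (vector [sq r2, - r2] :: real^2)"
  define d2v where "d2v = (vector [sq r1, - r1] :: real^2)"
  note G = geom[OF r, folded D_def N_def, folded u_def d1v_def d2v_def]
  define c where "c = corner a t r2"
  define m where "m = exp (- (norm c + 2)\<^sup>2 / 2) / (2 * pi)"
  have m0: "m \<ge> 0" unfolding m_def by simp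
  have ca: "sq r1 > 0" "sq r2 > 0" using r sq_pos by auto
  have c1: "c $ 1 = -a" and cw2: "c \<bullet> wv r2 = -t" using corner_facts[of r2 a t] r unfolding c_def by auto
  have DN: "(r2 - r1) / 2 \<le> D / N" by (rule G(3))
  have "m * (D / N) \<le> PP a t r2 - PP a t r1"
  proof (cases "c \<bullet> wv r1 \<le> -t")
    case True
    have E: "HA a \<inter> (HW t r1 - HW t r2) = {}"
    proof (rule ccontr)
      assume "HA a \<inter> (HW t r1 - HW t r2) \<noteq> {}"
      then obtain g where g: "-a \<le> g$1" "-t \<le> g \<bullet> wv r1" "\<not> -t \<le> g \<bullet> wv r2"
        unfolding HA_def HW_def by auto
      have "0 \<le> D * (g$1 - c$1)" using G(1) g(1) c1 by simp
      moreover have "sq r1 * (g \<bullet> wv r2 - c \<bullet> wv r2) < 0" using ca g(3) cw2 by (intro mult_pos_neg) auto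
      moreover have "0 \<le> sq r2 * (g \<bullet> wv r1 - c \<bullet> wv r1)" using ca g(2) True by simp
      ultimately show False using G(18)[of g c] by linarith
    qed
    have "m * \<bar>u$1 * d1v$2 - u$2 * d1v$1\<bar> \<le> gauss2_prob 0 (HA a \<inter> (HW t r2 - HW t r1))"
      unfolding m_def
    proof (rule para_lb)
      fix \<alpha> \<beta> :: real assume ab: "0 < \<alpha>" "\<alpha> < 1" "0 < \<beta>" "\<beta> < 1"
      let ?g = "c + \<alpha> *\<^sub>R u + \<beta> *\<^sub>R d1v"
      have g1: "?g $ 1 = -a + \<alpha> * u$1 + \<beta> * d1v$1" using c1 by simp
      have gw2: "?g \<bullet> wv r2 = -t + \<alpha> * (D / N)" using cw2 G(5) G(9) by (simp add: inner_add_left inner_diff_left)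
      have gw1: "?g \<bullet> wv r1 = c \<bullet> wv r1 - \<alpha> * (D / N) - \<beta> * D" using G(4) G(8) by (simp add: inner_add_left inner_diff_left)
      have "0 \<le> \<alpha> * u$1" "0 \<le> \<beta> * d1v$1" using ab G(6) G(10) by simp_all
      then have A: "-a \<le> ?g $ 1" using g1 by linarith
      have "0 < \<alpha> * (D / N)" using ab G(1) G(2) by simp
      then have C: "-t \<le> ?g \<bullet> wv r2" using gw2 by simp
      have "0 \<le> \<beta> * D" using ab G(1) by simp
      then have B: "\<not> -t \<le> ?g \<bullet> wv r1" using gw1 True \<open>0 < \<alpha> * (D / N)\<close> by linarith
      show "?g \<in> HA a \<inter> (HW t r2 - HW t r1)" using A B C unfolding HA_def HW_def by simp
    qed (simp_all add: G(7) G(11))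
    then show ?thesis using net_case1[OF E] G(17) by simp
  next
    case False
    have S: "HW t r2 - HW t r1 \<subseteq> HA a"
    proof
      fix g assume "g \<in> HW t r2 - HW t r1"
      then have g: "-t \<le> g \<bullet> wv r2" "\<not> -t \<le> g \<bullet> wv r1" unfolding HW_def by auto
      have "0 \<le> sq r1 * (g \<bullet> wv r2 - c \<bullet> wv r2)" using ca g(1) cw2 by simp
      moreover have "sq r2 * (g \<bullet> wv r1 - c \<bullet> wv r1) < 0" using ca g(2) False by (intro mult_pos_neg) auto
      ultimately have "0 < D * (g$1 - c$1)" using G(18)[of g c] by linarith
      then have "0 < g$1 - c$1" using G(1) by (simp add: zero_less_mult_iff)
      then show "g \<in> HA a" unfolding HA_def using c1 by simp
    qed
    have rr: "\<bar>r1\<bar> < 1" "\<bar>r2\<bar> < 1" using r by auto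
    have "m * \<bar>(-u)$1 * (-d1v)$2 - (-u)$2 * (-d1v)$1\<bar> \<le> gauss2_prob 0 ((HW t r1 - HW t r2) - HA a)"
      unfolding m_def
    proof (rule para_lb)
      fix \<alpha> \<beta> :: real assume ab: "0 < \<alpha>" "\<alpha> < 1" "0 < \<beta>" "\<beta> < 1"
      let ?g = "c + \<alpha> *\<^sub>R (-u) + \<beta> *\<^sub>R (-d1v)"
      have g1: "?g $ 1 = -a - \<alpha> * u$1 - \<beta> * d1v$1" using c1 by simp
      have gw2: "?g \<bullet> wv r2 = -t - \<alpha> * (D / N)" using cw2 G(5) G(9) by (simp add: inner_add_left inner_diff_left)
      have gw1: "?g \<bullet> wv r1 = c \<bullet> wv r1 + \<alpha> * (D / N) + \<beta> * D" using G(4) G(8) by (simp add: inner_add_left inner_diff_left)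
      have "0 \<le> \<alpha> * u$1" "0 < \<beta> * d1v$1" using ab G(6) G(10) by simp_all
      then have A: "\<not> -a \<le> ?g $ 1" using g1 by linarith
      have "0 < \<alpha> * (D / N)" using ab G(1) G(2) by simp
      then have C: "\<not> -t \<le> ?g \<bullet> wv r2" using gw2 by simp
      have "0 \<le> \<beta> * D" using ab G(1) by simp
      then have B: "-t \<le> ?g \<bullet> wv r1" using gw1 False \<open>0 < \<alpha> * (D / N)\<close> by linarith
      show "?g \<in> (HW t r1 - HW t r2) - HA a" using A B C unfolding HA_def HW_def by simp
    qed (simp_all add: G(7) G(11))
    then show ?thesis using net_case2[OF rr S] G(17) by simp
  qed
  moreover have "m * ((r2 - r1) / 2) \<le> m * (D / N)" using DN m0 by (rule mult_left_mono)
  ultimately show ?thesis unfolding m_def c_def by linarith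
qed

lemma PP_mono:
  assumes "-1 < r1" "r1 \<le> r2" "r2 < 1"
  shows "PP a t r1 \<le> PP a t r2"
proof (cases "r1 = r2")
  case False
  then have "r1 < r2" using assms by simp
  from sens1[OF assms(1) this assms(3), of a t] have
    "exp (- (norm (corner a t r1) + 2)\<^sup>2 / 2) / (2 * pi) * ((r2 - r1) / 2) \<le> PP a t r2 - PP a t r1" .
  moreover have "0 \<le> exp (- (norm (corner a t r1) + 2)\<^sup>2 / 2) / (2 * pi) * ((r2 - r1) / 2)"
    using \<open>r1 < r2\<close> by simp
  ultimately show ?thesis by linarith
qed simp
lemma gmono: "A \<subseteq> B \<Longrightarrow> B \<in> sets borel \<Longrightarrow> gauss2_prob 0 A \<le> gauss2_prob 0 B"
proof -
  assume "A \<subseteq> B" "B \<in> sets borel"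
  interpret prob_space "gauss2 0" by (rule gauss0_prob)
  show ?thesis unfolding gauss2_prob_def using \<open>A \<subseteq> B\<close> \<open>B \<in> sets borel\<close>
    by (intro finite_measure_mono) simp_all
qed

lemma gsubadd: "A \<in> sets borel \<Longrightarrow> B \<in> sets borel \<Longrightarrow> gauss2_prob 0 (A \<union> B) \<le> gauss2_prob 0 A + gauss2_prob 0 B"
proof -
  assume "A \<in> sets borel" "B \<in> sets borel"
  interpret prob_space "gauss2 0" by (rule gauss0_prob)
  have "measure (gauss2 0) (A \<union> B) = measure (gauss2 0) A + measure (gauss2 0) (B - A)"
    using \<open>A \<in> sets borel\<close> \<open>B \<in> sets borel\<close> by (intro finite_measure_Union') simp_all
  moreover have "measure (gauss2 0) (B - A) \<le> measure (gauss2 0) B"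
    using \<open>B \<in> sets borel\<close> by (intro finite_measure_mono) auto
  ultimately show ?thesis unfolding gauss2_prob_def by simp
qed

lemma PP_lip1:
  assumes r: "\<bar>r\<bar> < 1"
  shows "PP a t r - PP a' t' r \<le> \<bar>a - a'\<bar> + \<bar>t - t'\<bar>"
proof -
  let ?X = "HA a \<inter> HW t r" and ?Y = "HA a' \<inter> HW t' r"
  let ?S1 = "{g::real^2. -a \<le> g$1 \<and> g$1 \<le> -a + \<bar>a - a'\<bar>}"
  let ?S2 = "{g::real^2. -t \<le> g \<bullet> wv r \<and> g \<bullet> wv r \<le> -t + \<bar>t - t'\<bar>}"
  have s1: "?S1 \<in> sets borel" "?S2 \<in> sets borel"
  proof -
    have m1: "{g::real^2. l \<le> g$1 \<and> g$1 \<le> h} \<in> sets borel" for l h by measurable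
    have m2: "{g::real^2. l \<le> g \<bullet> wv r \<and> g \<bullet> wv r \<le> h} \<in> sets borel" for l h by measurable
    show "?S1 \<in> sets borel" by (rule m1)
    show "?S2 \<in> sets borel" by (rule m2)
  qed
  have "gauss2_prob 0 ?X = gauss2_prob 0 (?X \<inter> ?Y) + gauss2_prob 0 (?X - ?Y)"
    by (rule gsplit) simp_all
  moreover have "gauss2_prob 0 (?X \<inter> ?Y) \<le> gauss2_prob 0 ?Y" by (rule gmono) auto
  moreover have "?X - ?Y \<subseteq> ?S1 \<union> ?S2"
  proof
    fix g assume "g \<in> ?X - ?Y"
    then have h: "-a \<le> g$1" "-t \<le> g \<bullet> wv r" "\<not> (-a' \<le> g$1 \<and> -t' \<le> g \<bullet> wv r)"
      unfolding HA_def HW_def by auto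
    have t1: "t - t' \<le> \<bar>t - t'\<bar>" "a - a' \<le> \<bar>a - a'\<bar>" by (rule abs_ge_self)+
    show "g \<in> ?S1 \<union> ?S2"
    proof (cases "-a' \<le> g$1")
      case True
      then have "g \<bullet> wv r < -t'" using h(3) by simp
      then have "g \<in> ?S2" using h(2) t1 by simp
      then show ?thesis by blast
    next
      case False
      then have "g \<in> ?S1" using h(1) t1 by simp
      then show ?thesis by blast
    qed
  qed
  then have "gauss2_prob 0 (?X - ?Y) \<le> gauss2_prob 0 (?S1 \<union> ?S2)" by (rule gmono) (use s1 in simp)
  moreover have "gauss2_prob 0 (?S1 \<union> ?S2) \<le> gauss2_prob 0 ?S1 + gauss2_prob 0 ?S2" by (rule gsubadd[OF s1])
  moreover have "gauss2_prob 0 ?S1 \<le> \<bar>a - a'\<bar>" by (rule strip_axis) simp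
  moreover have "gauss2_prob 0 ?S2 \<le> \<bar>t - t'\<bar>" by (rule strip_dir[OF wv_unit[OF r]]) simp
  ultimately show ?thesis unfolding PP_alt by linarith
qed

lemma PP_lip:
  assumes r: "\<bar>r\<bar> < 1"
  shows "\<bar>PP a t r - PP a' t' r\<bar> \<le> \<bar>a - a'\<bar> + \<bar>t - t'\<bar>"
  using PP_lip1[OF r, of a t a' t'] PP_lip1[OF r, of a' t' a t] by (simp add: abs_minus_commute)

lemma good:
  assumes r: "\<bar>r\<bar> < 1"
    and Q: "\<forall>s1\<in>{1, -1::real}. \<forall>s2\<in>{1, -1::real}. \<gamma> \<le> QP a t r s1 s2"
  shows "2 * \<gamma> \<le> exp (- (norm (corner a t r))\<^sup>2 / 2)"
proof -
  define c where "c = corner a t r"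
  define s where "s = sq r"
  have sp: "s > 0" unfolding s_def using sq_pos[OF r] .
  have c1: "c $ 1 = -a" and cw: "c \<bullet> wv r = -t" using corner_facts[OF r] unfolding c_def by auto
  define uh where "uh = (if c = 0 then (vector [1, 0] :: real^2) else (1 / norm c) *\<^sub>R c)"
  have uu: "uh \<bullet> uh = 1"
  proof (cases "c = 0")
    case True then show ?thesis unfolding uh_def by (simp add: inner2)
  next
    case False
    then have "uh \<bullet> uh = (1 / norm c) * (1 / norm c) * (c \<bullet> c)" unfolding uh_def by simp
    also have "c \<bullet> c = norm c * norm c" by (simp add: dot_square_norm power2_eq_square)
    finally show ?thesis using False by simp
  qed
  have cu: "c \<bullet> uh = norm c"
  proof (cases "c = 0")
    case True then show ?thesis unfolding uh_def by simp
  next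
    case False
    then have "c \<bullet> uh = (1 / norm c) * (c \<bullet> c)" unfolding uh_def by simp
    also have "c \<bullet> c = norm c * norm c" by (simp add: dot_square_norm power2_eq_square)
    finally show ?thesis using False by simp
  qed
  define \<alpha> where "\<alpha> = (uh$1 * s - uh$2 * r) / s"
  define \<beta> where "\<beta> = uh$2 / s"
  have iden: "d \<bullet> uh = \<alpha> * d$1 + \<beta> * (d \<bullet> wv r)" for d :: "real^2"
  proof -
    have "\<alpha> * d$1 + \<beta> * (d \<bullet> wv r) = (d$1 * (uh$1 * s - uh$2 * r) + uh$2 * (d$1 * r + d$2 * s)) / s"
      unfolding \<alpha>_def \<beta>_def s_def by (simp add: wv_inner add_divide_distrib)
    also have "\<dots> = (d$1 * uh$1 + d$2 * uh$2) * s / s" by (simp add: algebra_simps)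
    also have "\<dots> = d \<bullet> uh" using sp by (simp add: inner2)
    finally show ?thesis by simp
  qed
  define s1 where "s1 = (if 0 \<le> \<alpha> then 1 else -1 :: real)"
  define s2 where "s2 = (if 0 \<le> \<beta> then 1 else -1 :: real)"
  have s12: "s1 \<in> {1, -1}" "s2 \<in> {1, -1}" unfolding s1_def s2_def by auto
  have "\<gamma> \<le> QP a t r s1 s2" using Q s12 by blast
  also have "QP a t r s1 s2 \<le> gauss2_prob 0 {g. norm c \<le> g \<bullet> uh}"
    unfolding QP_def
  proof (rule gmono)
    show "{g. norm c \<le> g \<bullet> uh} \<in> sets borel" by measurable
    show "{g. 0 \<le> s1 * (g $ 1 + a) \<and> 0 \<le> s2 * (g \<bullet> wv r + t)} \<subseteq> {g. norm c \<le> g \<bullet> uh}"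
    proof
      fix g :: "real^2" assume "g \<in> {g. 0 \<le> s1 * (g $ 1 + a) \<and> 0 \<le> s2 * (g \<bullet> wv r + t)}"
      then have g: "0 \<le> s1 * (g $ 1 + a)" "0 \<le> s2 * (g \<bullet> wv r + t)" by auto
      have "0 \<le> \<alpha> * (g$1 + a)"
        using g(1) unfolding s1_def by (cases "0 \<le> \<alpha>") (auto simp: mult_nonpos_nonpos)
      moreover have "0 \<le> \<beta> * (g \<bullet> wv r + t)"
        using g(2) unfolding s2_def by (cases "0 \<le> \<beta>") (auto simp: mult_nonpos_nonpos)
      ultimately have "0 \<le> (g - c) \<bullet> uh" unfolding iden using c1 cw by (simp add: inner_diff_left)
      then show "g \<in> {g. norm c \<le> g \<bullet> uh}" using cu by (simp add: inner_diff_left)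
    qed
  qed
  also have "\<dots> \<le> exp (- (norm c)\<^sup>2 / 2) / 2" by (rule tail_dir[OF uu]) simp
  finally show ?thesis unfolding c_def by simp
qed
definition estF :: "(real \<Rightarrow> real) \<Rightarrow> real \<Rightarrow> real" where
  "estF F g = (if {r. -1 < r \<and> r < 1 \<and> F r \<le> g} = {} then -1 else Sup {r. -1 < r \<and> r < 1 \<and> F r \<le> g})"

lemma est_abs:
  fixes F G :: "real \<Rightarrow> real"
  assumes mono: "\<And>r1 r2. -1 < r1 \<Longrightarrow> r1 \<le> r2 \<Longrightarrow> r2 < 1 \<Longrightarrow> F r1 \<le> F r2"
    and close: "\<And>r. -1 < r \<Longrightarrow> r < 1 \<Longrightarrow> \<bar>F r - G r\<bar> \<le> e1"
    and rho: "-1 < \<rho>" "\<rho> < 1" and gfit: "\<bar>g - G \<rho>\<bar> \<le> e2"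
    and sensU: "\<And>r. \<rho> < r \<Longrightarrow> r < 1 \<Longrightarrow> \<kappa> * (r - \<rho>) \<le> G r - G \<rho>"
    and sensL: "\<And>r. -1 < r \<Longrightarrow> r < \<rho> \<Longrightarrow> \<kappa> * (\<rho> - r) \<le> G \<rho> - G r"
    and kp: "\<kappa> > 0" and e: "0 \<le> e1" "0 \<le> e2"
  shows "\<bar>estF F g - \<rho>\<bar> \<le> (e1 + e2) / \<kappa>"
proof -
  define S where "S = {r. -1 < r \<and> r < 1 \<and> F r \<le> g}"
  define B where "B = (e1 + e2) / \<kappa>"
  have B0: "0 \<le> B" unfolding B_def using kp e by simp
  have bdd: "bdd_above S" unfolding S_def by (rule bdd_aboveI[of _ 1]) auto
  have est: "estF F g = (if S = {} then -1 else Sup S)" unfolding estF_def S_def by simp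
  have ge: "-1 \<le> estF F g"
  proof (cases "S = {}")
    case False
    then obtain x where "x \<in> S" by auto
    then have "x \<le> Sup S" using bdd by (rule cSup_upper)
    moreover have "-1 < x" using \<open>x \<in> S\<close> unfolding S_def by simp
    ultimately show ?thesis using est False by simp
  qed (simp add: est)
  have up: "estF F g \<le> \<rho> + B"
  proof (rule ccontr)
    assume "\<not> estF F g \<le> \<rho> + B"
    then have gt: "\<rho> + B < estF F g" by simp
    have ne: "S \<noteq> {}" using gt est rho B0 by (auto split: if_splits)
    define r where "r = (\<rho> + B + estF F g) / 2"
    have r1: "\<rho> + B < r" "r < Sup S" using gt est ne unfolding r_def by auto
    then obtain x where x: "x \<in> S" "r < x" using less_cSup_iff[OF ne bdd] by blast
    have xS: "-1 < x" "x < 1" "F x \<le> g" using x(1) unfolding S_def by auto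
    have rr: "\<rho> < r" "r < 1" using r1(1) B0 x(2) xS(2) by linarith+
    have "F r \<le> F x" using mono[of r x] rr rho x(2) xS(2) by simp
    moreover have "\<bar>F r - G r\<bar> \<le> e1" using close[of r] rr rho by simp
    moreover have "\<kappa> * (r - \<rho>) \<le> G r - G \<rho>" using sensU[OF rr] .
    ultimately have "\<kappa> * (r - \<rho>) \<le> e1 + e2" using xS(3) gfit by (simp add: abs_le_iff)
    then have "r - \<rho> \<le> B" unfolding B_def using kp by (simp add: field_simps)
    then show False using r1(1) by simp
  qed
  have lo: "\<rho> - B \<le> estF F g"
  proof (rule ccontr)
    assume "\<not> \<rho> - B \<le> estF F g"
    then have lt: "estF F g < \<rho> - B" by simp
    define r where "r = (\<rho> - B + estF F g) / 2"
    have r1: "r < \<rho> - B" "estF F g < r" using lt unfolding r_def by auto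
    have rr: "-1 < r" "r < \<rho>" using r1 ge B0 by linarith+
    have notS: "r \<notin> S"
    proof
      assume "r \<in> S"
      then have "S \<noteq> {}" by auto
      then have "r \<le> estF F g" using cSup_upper[OF \<open>r \<in> S\<close> bdd] est by simp
      then show False using r1(2) by simp
    qed
    then have "g < F r" using rr rho unfolding S_def by auto
    moreover have "\<bar>F r - G r\<bar> \<le> e1" using close[of r] rr rho by simp
    moreover have "\<kappa> * (\<rho> - r) \<le> G \<rho> - G r" using sensL[OF rr] .
    ultimately have "\<kappa> * (\<rho> - r) \<le> e1 + e2" using gfit by (simp add: abs_le_iff)
    then have "\<rho> - r \<le> B" unfolding B_def using kp by (simp add: field_simps)
    then show False using r1(1) by simp
  qed
  show ?thesis using up lo unfolding B_def by (simp add: abs_le_iff)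
qed

lemma indep_inner:
  fixes v1 v2 :: "real^2"
  assumes "norm v1 = 1" "norm v2 = 1" "v1 \<noteq> v2" "independent {v1, v2}"
  shows "\<bar>v1 \<bullet> v2\<bar> < 1"
proof -
  have le: "\<bar>v1 \<bullet> v2\<bar> \<le> 1" using Cauchy_Schwarz_ineq2[of v1 v2] assms by simp
  have "\<bar>v1 \<bullet> v2\<bar> \<noteq> 1"
  proof
    assume "\<bar>v1 \<bullet> v2\<bar> = 1"
    then have "\<bar>v1 \<bullet> v2\<bar> = norm v1 * norm v2" using assms by simp
    then have "norm v1 *\<^sub>R v2 = norm v2 *\<^sub>R v1 \<or> norm v1 *\<^sub>R v2 = - (norm v2 *\<^sub>R v1)"
      by (simp add: norm_cauchy_schwarz_abs_eq)
    then have "v2 = v1 \<or> v2 = - v1" using assms by simp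
    then have "v2 = - v1" using assms by simp
    moreover have "v2 \<in> span {v1}" using \<open>v2 = - v1\<close> by (simp add: span_neg span_base)
    moreover have "v2 \<noteq> v1" using assms by simp
    ultimately have "dependent {v1, v2}"
      unfolding dependent_def by (intro bexI[of _ v2]) (auto simp: insert_Diff_if)
    then show False using assms by simp
  qed
  then show ?thesis using le by simp
qed
lemma final_arith:
  fixes \<epsilon> \<gamma> \<kappa> n :: real
  assumes ep: "0 < \<epsilon>" "\<epsilon> < 1" and gp: "0 < \<gamma>"
    and good: "2 * \<gamma> \<le> exp (- n\<^sup>2 / 2)" and n0: "0 \<le> n"
    and kdef: "\<kappa> = exp (- (n + 2)\<^sup>2 / 2) / (2 * pi) / 2"
    and X: "x \<le> (2 * \<epsilon> + \<epsilon>) / \<kappa>"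
  shows "x \<le> 4000 * \<epsilon> / \<gamma> ^ 4 * sqrt (ln (1 / (\<gamma> * \<epsilon>)))"
proof -
  have g1: "exp (- n\<^sup>2 / 2) \<le> 1" by simp
  then have "2 * \<gamma> \<le> 1" using good by linarith
  then have gh: "\<gamma> \<le> 1/2" by simp
  have "(n + 2)\<^sup>2 / 2 \<le> n\<^sup>2 + 4"
  proof -
    have "0 \<le> (n - 2)\<^sup>2" by simp
    then show ?thesis by (simp add: power2_eq_square algebra_simps)
  qed
  then have E1: "exp (- (n\<^sup>2 + 4)) \<le> exp (- (n + 2)\<^sup>2 / 2)" by simp
  have E2: "exp (- (n\<^sup>2 + 4)) = exp (- n\<^sup>2 / 2) ^ 2 * exp (-4)"
    by (simp add: exp_add[symmetric] power2_eq_square exp_diff[symmetric] algebra_simps)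
  have E3: "(2 * \<gamma>)\<^sup>2 \<le> exp (- n\<^sup>2 / 2) ^ 2" using good gp by (intro power_mono) simp_all
  have e4: "1 / 81 \<le> exp (-4::real)"
  proof -
    have "exp (4::real) = exp 1 ^ 4" by (simp add: exp_of_nat_mult[symmetric])
    also have "\<dots> \<le> 3 ^ 4" by (intro power_mono exp_le) simp
    finally have "exp (4::real) \<le> 81" by simp
    then show ?thesis by (simp add: exp_minus field_simps)
  qed
  have "(2 * \<gamma>)\<^sup>2 * (1 / 81) \<le> exp (- n\<^sup>2 / 2) ^ 2 * exp (-4)"
    by (rule mult_mono[OF E3 e4]) simp_all
  then have "(2 * \<gamma>)\<^sup>2 * (1 / 81) \<le> exp (- (n + 2)\<^sup>2 / 2)" using E1 E2 by linarith
  then have kl: "\<gamma>\<^sup>2 / (81 * pi) \<le> \<kappa>" unfolding kdef by (simp add: field_simps power2_eq_square)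
  have g2p: "0 < \<gamma>\<^sup>2 / (81 * pi)" using gp by simp
  have "(2 * \<epsilon> + \<epsilon>) / \<kappa> \<le> (3 * \<epsilon>) / (\<gamma>\<^sup>2 / (81 * pi))"
    using kl g2p ep by (intro frac_le) simp_all
  also have "\<dots> = 243 * pi * (\<epsilon> / \<gamma>\<^sup>2)" using gp by (simp add: field_simps)
  also have "\<dots> \<le> 1000 * (\<epsilon> / \<gamma>\<^sup>2)"
    using pi_less_4 ep gp by (intro mult_right_mono) simp_all
  also have "\<epsilon> / \<gamma>\<^sup>2 \<le> \<epsilon> / \<gamma> ^ 4"
  proof (rule divide_left_mono)
    have "\<gamma> ^ 4 = \<gamma>\<^sup>2 * \<gamma>\<^sup>2" by (simp add: power2_eq_square power4_eq_xxxx)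
    also have "\<dots> \<le> \<gamma>\<^sup>2 * 1" using gh gp by (intro mult_left_mono) (simp_all add: power_le_one)
    finally show "\<gamma> ^ 4 \<le> \<gamma>\<^sup>2" by simp
  qed (use ep gp in simp_all)
  finally have A: "x \<le> 1000 * (\<epsilon> / \<gamma> ^ 4)" using X by simp
  have "\<gamma> * \<epsilon> < \<gamma> * 1" using gp ep by (intro mult_strict_left_mono) simp_all
  then have "\<gamma> * \<epsilon> < 1/2" using gh by linarith
  then have "2 \<le> 1 / (\<gamma> * \<epsilon>)" using gp ep by (simp add: field_simps)
  then have "ln 2 \<le> ln (1 / (\<gamma> * \<epsilon>))" by (rule ln_mono) simp
  moreover have "(1/2::real)\<^sup>2 = 1/4" by (simp add: power2_eq_square)
  ultimately have "(1/2)\<^sup>2 \<le> ln (1 / (\<gamma> * \<epsilon>))" using ln2_ge_two_thirds by linarith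
  then have sq: "1/2 \<le> sqrt (ln (1 / (\<gamma> * \<epsilon>)))" by (rule real_le_rsqrt)
  define y where "y = \<epsilon> / \<gamma> ^ 4"
  have y0: "0 \<le> y" unfolding y_def using ep gp by simp
  have "y * (1/2) \<le> y * sqrt (ln (1 / (\<gamma> * \<epsilon>)))" using sq y0 by (rule mult_left_mono)
  then have "1000 * y \<le> 4000 * y * sqrt (ln (1 / (\<gamma> * \<epsilon>)))" using y0 by linarith
  moreover have "4000 * \<epsilon> / \<gamma> ^ 4 = 4000 * y" unfolding y_def by simp
  ultimately show ?thesis using A unfolding y_def[symmetric] by simp
qed
theorem lemma8:
  shows "\<exists>C::real. C > 0 \<and>
    (\<exists>est :: real \<Rightarrow> real \<Rightarrow> real \<Rightarrow> real \<Rightarrow> real \<Rightarrow> real \<Rightarrow> real.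
      \<forall>(mu::real^2) (v1::real^2) (v2::real^2) (\<epsilon>::real) (\<gamma>::real)
        (d1::real) (d2::real) (gh :: real \<Rightarrow> real \<Rightarrow> real).
        norm v1 = 1 \<longrightarrow> norm v2 = 1 \<longrightarrow> v1 \<noteq> v2 \<longrightarrow> independent {v1, v2} \<longrightarrow>
        \<epsilon> > 0 \<longrightarrow> \<gamma> > 0 \<longrightarrow> \<epsilon> < 1 \<longrightarrow>
        d1 \<ge> d2 \<longrightarrow> d2 \<ge> 0 \<longrightarrow>
        \<bar>d1 - v1 \<bullet> mu\<bar> \<le> \<epsilon> \<longrightarrow> \<bar>d2 - v2 \<bullet> mu\<bar> \<le> \<epsilon> \<longrightarrow>
        (\<forall>s1\<in>{1, -1::real}. \<forall>s2\<in>{1, -1::real}.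
            quad_prob mu (s1 *\<^sub>R v1) (s2 *\<^sub>R v2) \<ge> \<gamma>) \<longrightarrow>
        (\<forall>s1\<in>{1, -1::real}. \<forall>s2\<in>{1, -1::real}.
            \<bar>gh s1 s2 - quad_prob mu (s1 *\<^sub>R v1) (s2 *\<^sub>R v2)\<bar> \<le> \<epsilon>) \<longrightarrow>
        \<bar>est d1 d2 (gh 1 1) (gh 1 (-1)) (gh (-1) 1) (gh (-1) (-1)) - v1 \<bullet> v2\<bar>
          \<le> C * \<epsilon> / \<gamma> ^ 4 * sqrt (ln (1 / (\<gamma> * \<epsilon>))))"
proof -
  define est where "est = (\<lambda>(d1::real) (d2::real) (g11::real) (g12::real) (g21::real) (g22::real). estF (PP d1 d2) g11)"
  have main: "\<forall>(mu::real^2) (v1::real^2) (v2::real^2) (\<epsilon>::real) (\<gamma>::real)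
        (d1::real) (d2::real) (gh :: real \<Rightarrow> real \<Rightarrow> real).
        norm v1 = 1 \<longrightarrow> norm v2 = 1 \<longrightarrow> v1 \<noteq> v2 \<longrightarrow> independent {v1, v2} \<longrightarrow>
        \<epsilon> > 0 \<longrightarrow> \<gamma> > 0 \<longrightarrow> \<epsilon> < 1 \<longrightarrow>
        d1 \<ge> d2 \<longrightarrow> d2 \<ge> 0 \<longrightarrow>
        \<bar>d1 - v1 \<bullet> mu\<bar> \<le> \<epsilon> \<longrightarrow> \<bar>d2 - v2 \<bullet> mu\<bar> \<le> \<epsilon> \<longrightarrow>
        (\<forall>s1\<in>{1, -1::real}. \<forall>s2\<in>{1, -1::real}.
            quad_prob mu (s1 *\<^sub>R v1) (s2 *\<^sub>R v2) \<ge> \<gamma>) \<longrightarrow>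
        (\<forall>s1\<in>{1, -1::real}. \<forall>s2\<in>{1, -1::real}.
            \<bar>gh s1 s2 - quad_prob mu (s1 *\<^sub>R v1) (s2 *\<^sub>R v2)\<bar> \<le> \<epsilon>) \<longrightarrow>
        \<bar>est d1 d2 (gh 1 1) (gh 1 (-1)) (gh (-1) 1) (gh (-1) (-1)) - v1 \<bullet> v2\<bar>
          \<le> 4000 * \<epsilon> / \<gamma> ^ 4 * sqrt (ln (1 / (\<gamma> * \<epsilon>)))"
  proof (intro allI impI)
    fix mu v1 v2 :: "real^2" and \<epsilon> \<gamma> d1 d2 :: real and gh :: "real \<Rightarrow> real \<Rightarrow> real"
    assume n1: "norm v1 = 1" and n2: "norm v2 = 1" and ne: "v1 \<noteq> v2" and ind: "independent {v1, v2}"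
      and ep: "\<epsilon> > 0" and gp: "\<gamma> > 0" and ep1: "\<epsilon> < 1" and "d1 \<ge> d2" "d2 \<ge> 0"
      and hd1: "\<bar>d1 - v1 \<bullet> mu\<bar> \<le> \<epsilon>" and hd2: "\<bar>d2 - v2 \<bullet> mu\<bar> \<le> \<epsilon>"
      and Qg: "\<forall>s1\<in>{1, -1::real}. \<forall>s2\<in>{1, -1::real}. quad_prob mu (s1 *\<^sub>R v1) (s2 *\<^sub>R v2) \<ge> \<gamma>"
      and Qe: "\<forall>s1\<in>{1, -1::real}. \<forall>s2\<in>{1, -1::real}. \<bar>gh s1 s2 - quad_prob mu (s1 *\<^sub>R v1) (s2 *\<^sub>R v2)\<bar> \<le> \<epsilon>"
    define \<rho> where "\<rho> = v1 \<bullet> v2"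
    define a where "a = v1 \<bullet> mu"
    define b where "b = v2 \<bullet> mu"
    have rho: "\<bar>\<rho>\<bar> < 1" unfolding \<rho>_def by (rule indep_inner[OF n1 n2 ne ind])
    have qq: "quad_prob mu (s1 *\<^sub>R v1) (s2 *\<^sub>R v2) = QP a b \<rho> s1 s2" for s1 s2
      unfolding a_def b_def \<rho>_def by (rule quad_QP[OF n1 n2 rho[unfolded \<rho>_def]])
    have gfit: "\<bar>gh 1 1 - PP a b \<rho>\<bar> \<le> \<epsilon>"
    proof -
      have "\<bar>gh 1 1 - quad_prob mu (1 *\<^sub>R v1) (1 *\<^sub>R v2)\<bar> \<le> \<epsilon>" using Qe by blast
      then show ?thesis unfolding qq QP11 .
    qed
    have goodQ: "\<forall>s1\<in>{1, -1::real}. \<forall>s2\<in>{1, -1::real}. \<gamma> \<le> QP a b \<rho> s1 s2"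
      using Qg unfolding qq .
    define c where "c = corner a b \<rho>"
    have good2: "2 * \<gamma> \<le> exp (- (norm c)\<^sup>2 / 2)" unfolding c_def by (rule good[OF rho goodQ])
    define \<kappa> where "\<kappa> = exp (- (norm c + 2)\<^sup>2 / 2) / (2 * pi) / 2"
    have kp: "\<kappa> > 0" unfolding \<kappa>_def by simp
    have r1: "-1 < \<rho>" "\<rho> < 1" using rho by auto
    have "\<bar>estF (PP d1 d2) (gh 1 1) - \<rho>\<bar> \<le> (2 * \<epsilon> + \<epsilon>) / \<kappa>"
    proof (rule est_abs[where G = "PP a b"])
      show "PP d1 d2 x \<le> PP d1 d2 y" if "-1 < x" "x \<le> y" "y < 1" for x y
        using PP_mono[OF that] .
      show "\<bar>PP d1 d2 r - PP a b r\<bar> \<le> 2 * \<epsilon>" if "-1 < r" "r < 1" for r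
      proof -
        have "\<bar>r\<bar> < 1" using that by auto
        then have "\<bar>PP d1 d2 r - PP a b r\<bar> \<le> \<bar>d1 - a\<bar> + \<bar>d2 - b\<bar>" by (rule PP_lip)
        then show ?thesis using hd1 hd2 unfolding a_def b_def by linarith
      qed
      show "\<kappa> * (r - \<rho>) \<le> PP a b r - PP a b \<rho>" if "\<rho> < r" "r < 1" for r
        using sens1[OF r1(1) that, of a b] unfolding \<kappa>_def c_def by (simp add: field_simps)
      show "\<kappa> * (\<rho> - r) \<le> PP a b \<rho> - PP a b r" if "-1 < r" "r < \<rho>" for r
        using sens2[OF that r1(2), of a b] unfolding \<kappa>_def c_def by (simp add: field_simps)
    qed (use r1 gfit kp ep in simp_all)
    then have X: "\<bar>est d1 d2 (gh 1 1) (gh 1 (-1)) (gh (-1) 1) (gh (-1) (-1)) - v1 \<bullet> v2\<bar> \<le> (2 * \<epsilon> + \<epsilon>) / \<kappa>"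
      unfolding est_def \<rho>_def by simp
    show "\<bar>est d1 d2 (gh 1 1) (gh 1 (-1)) (gh (-1) 1) (gh (-1) (-1)) - v1 \<bullet> v2\<bar>
          \<le> 4000 * \<epsilon> / \<gamma> ^ 4 * sqrt (ln (1 / (\<gamma> * \<epsilon>)))"
      by (rule final_arith[OF ep ep1 gp good2 _ \<kappa>_def X]) simp
  qed
  show ?thesis by (rule exI[of _ 4000], rule conjI, simp, rule exI[of _ est], rule main)
qed

end
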